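(* Let $S$ be a finite-dimensional quantum system and $\Phi$ any CPTP map on $S$ with trace-dual $\Phi^\dagger$. Let $H_0,H_\tau$ be Hermitian operators on $S$, $\beta>0$, and for $t\in\{0,\tau\}$ let $F_t=-\beta^{-1}\ln\operatorname{Tr}e^{-\beta H_t}$, $\Gamma_t=\exp[\beta(F_t-H_t)]$, $\Delta F=F_\tau-F_0$. Assume the initial state is $\rho_0=\Gamma_0$ and let $\Delta E=\operatorname{Tr}[\Phi(\Gamma_0)H_\tau]-\operatorname{Tr}[\Gamma_0H_0]$. Let $\gamma:=\Phi^\dagger(\Gamma_\tau)/\operatorname{Tr}[\Phi^\dagger(\Gamma_\tau)]$. Then $$\beta(\Delta E-\Delta F)\ \ge\ \frac{8}{\pi^2}\mathcal{L}^2(\Gamma_0,\gamma)-\ln\operatorname{Tr}[\Phi^\dagger(\Gamma_\tau)].$$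
   Context: The trace-dual $\Phi^\dagger$ satisfies $\operatorname{Tr}[\Phi(X)Y]=\operatorname{Tr}[X\Phi^\dagger(Y)]$ for all $X,Y$. For density matrices $\rho_1,\rho_2$, the fidelity is $\mathsf F(\rho_1,\rho_2)=\|\sqrt{\rho_1}\sqrt{\rho_2}\|_1$ (trace norm) and the Bures angle is $\mathcal L(\rho_1,\rho_2)=\arccos\mathsf F(\rho_1,\rho_2)$. *)

theory Defs
  imports Complex_Main "Jordan_Normal_Form.Matrix"
begin

definition cadj :: "complex mat \<Rightarrow> complex mat" where
  "cadj A = mat (dim_col A) (dim_row A) (\<lambda>(i,j). cnj (A $$ (j,i)))"

definition hermitian :: "nat \<Rightarrow> complex mat \<Rightarrow> bool" where
  "hermitian n A \<longleftrightarrow> A \<in> carrier_mat n n \<and> cadj A = A"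

definition psd :: "nat \<Rightarrow> complex mat \<Rightarrow> bool" where
  "psd n A \<longleftrightarrow> hermitian n A \<and>
     (\<forall>v \<in> carrier_vec n. 0 \<le> Re (\<Sum>i<n. cnj (v $ i) * (A *\<^sub>v v) $ i))"


definition trace :: "complex mat \<Rightarrow> complex" where
  "trace A = (\<Sum>i<dim_row A. A $$ (i,i))"

definition mat_exp :: "complex mat \<Rightarrow> complex mat" where
  "mat_exp A = mat (dim_row A) (dim_col A)
     (\<lambda>(i,j). \<Sum>k. (A ^\<^sub>m k) $$ (i,j) / of_nat (fact k))"

definition psd_sqrt :: "complex mat \<Rightarrow> complex mat" where
  "psd_sqrt A = (THE B. psd (dim_row A) B \<and> B * B = A)"

definition trace_norm :: "complex mat \<Rightarrow> real" where
  "trace_norm X = Re (trace (psd_sqrt (cadj X * X)))"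

definition fidelity :: "complex mat \<Rightarrow> complex mat \<Rightarrow> real" where
  "fidelity r1 r2 = trace_norm (psd_sqrt r1 * psd_sqrt r2)"

definition bures_angle :: "complex mat \<Rightarrow> complex mat \<Rightarrow> real" where
  "bures_angle r1 r2 = arccos (fidelity r1 r2)"

text \<open>Linear maps on operators of S and the CPTP property.
  (id_m \<otimes> Phi)(X) on C^m \<otimes> C^n, index (a,i) \<mapsto> a*n+i.\<close>
definition id_tensor :: "nat \<Rightarrow> nat \<Rightarrow> (complex mat \<Rightarrow> complex mat) \<Rightarrow> complex mat \<Rightarrow> complex mat" where
  "id_tensor m n \<Phi> X = mat (m*n) (m*n) (\<lambda>(p,q).
     \<Phi> (mat n n (\<lambda>(i,j). X $$ ((p div n) * n + i, (q div n) * n + j))) $$ (p mod n, q mod n))"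

definition linear_op_map :: "nat \<Rightarrow> (complex mat \<Rightarrow> complex mat) \<Rightarrow> bool" where
  "linear_op_map n \<Phi> \<longleftrightarrow>
     (\<forall>X \<in> carrier_mat n n. \<Phi> X \<in> carrier_mat n n) \<and>
     (\<forall>X \<in> carrier_mat n n. \<forall>Y \<in> carrier_mat n n. \<Phi> (X + Y) = \<Phi> X + \<Phi> Y) \<and>
     (\<forall>X \<in> carrier_mat n n. \<forall>c. \<Phi> (c \<cdot>\<^sub>m X) = c \<cdot>\<^sub>m \<Phi> X)"

definition completely_positive :: "nat \<Rightarrow> (complex mat \<Rightarrow> complex mat) \<Rightarrow> bool" where
  "completely_positive n \<Phi> \<longleftrightarrow>
     (\<forall>m X. psd (m*n) X \<longrightarrow> psd (m*n) (id_tensor m n \<Phi> X))"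

definition trace_preserving :: "nat \<Rightarrow> (complex mat \<Rightarrow> complex mat) \<Rightarrow> bool" where
  "trace_preserving n \<Phi> \<longleftrightarrow> (\<forall>X \<in> carrier_mat n n. trace (\<Phi> X) = trace X)"

definition CPTP :: "nat \<Rightarrow> (complex mat \<Rightarrow> complex mat) \<Rightarrow> bool" where
  "CPTP n \<Phi> \<longleftrightarrow> linear_op_map n \<Phi> \<and> completely_positive n \<Phi> \<and> trace_preserving n \<Phi>"

definition is_trace_dual :: "nat \<Rightarrow> (complex mat \<Rightarrow> complex mat) \<Rightarrow> (complex mat \<Rightarrow> complex mat) \<Rightarrow> bool" where
  "is_trace_dual n \<Phi> \<Phi>' \<longleftrightarrow>
     (\<forall>Y \<in> carrier_mat n n. \<Phi>' Y \<in> carrier_mat n n) \<and>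
     (\<forall>X \<in> carrier_mat n n. \<forall>Y \<in> carrier_mat n n. trace (\<Phi> X * Y) = trace (X * \<Phi>' Y))"

definition free_energy :: "nat \<Rightarrow> real \<Rightarrow> complex mat \<Rightarrow> real" where
  "free_energy n \<beta> H = - (1/\<beta>) * ln (Re (trace (mat_exp (complex_of_real (-\<beta>) \<cdot>\<^sub>m H))))"

definition gibbs :: "nat \<Rightarrow> real \<Rightarrow> complex mat \<Rightarrow> complex mat" where
  "gibbs n \<beta> H = mat_exp (complex_of_real \<beta> \<cdot>\<^sub>m
      (complex_of_real (free_energy n \<beta> H) \<cdot>\<^sub>m 1\<^sub>m n - H))"

end

theory Submission imports Defs "Jordan_Normal_Form.Schur_Decomposition" begin


lemma mult_idx[simp]:
  "i < dim_row A \<Longrightarrow> j < dim_col B \<Longrightarrow> dim_col A = dim_row B \<Longrightarrow> (A * B) $$ (i,j) = (\<Sum>k<dim_row B. A $$ (i,k) * B $$ (k,j))"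
  by (auto simp: scalar_prod_def atLeast0LessThan intro!: sum.cong)

lemma multv_idx[simp]:
  "i < dim_row A \<Longrightarrow> dim_col A = dim_vec v \<Longrightarrow> (A *\<^sub>v v) $ i = (\<Sum>k<dim_vec v. A $$ (i,k) * v $ k)"
  by (auto simp: scalar_prod_def atLeast0LessThan intro!: sum.cong)

declare index_mult_mat(1)[simp del] index_mult_mat_vec[simp del]

lemma cadj_dims[simp]: "dim_row (cadj A) = dim_col A" "dim_col (cadj A) = dim_row A"
  by (auto simp: cadj_def)

lemma cadj_idx[simp]: "i < dim_col A \<Longrightarrow> j < dim_row A \<Longrightarrow> cadj A $$ (i,j) = cnj (A $$ (j,i))"
  by (simp add: cadj_def)

lemma cadj_carrier[simp]: "A \<in> carrier_mat r c \<Longrightarrow> cadj A \<in> carrier_mat c r"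
  unfolding carrier_mat_def by simp

lemma cadj_cadj[simp]: "cadj (cadj A) = A"
  by (rule eq_matI) auto

lemma cadj_mult: "A \<in> carrier_mat r k \<Longrightarrow> B \<in> carrier_mat k c \<Longrightarrow> cadj (A * B) = cadj B * cadj A"
  by (rule eq_matI) (auto simp: mult_idx mult.commute)

lemma cadj_add: "A \<in> carrier_mat r c \<Longrightarrow> B \<in> carrier_mat r c \<Longrightarrow> cadj (A + B) = cadj A + cadj B"
  by (rule eq_matI) auto

lemma cadj_minus: "A \<in> carrier_mat r c \<Longrightarrow> B \<in> carrier_mat r c \<Longrightarrow> cadj (A - B) = cadj A - cadj B"
  by (rule eq_matI) auto

lemma cadj_smult: "cadj (a \<cdot>\<^sub>m A) = cnj a \<cdot>\<^sub>m cadj A"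
  by (rule eq_matI) auto

lemma cadj_one[simp]: "cadj (1\<^sub>m n) = 1\<^sub>m n"
  by (rule eq_matI) auto

lemma mult_sq[simp]: "A \<in> carrier_mat n n \<Longrightarrow> B \<in> carrier_mat n n \<Longrightarrow> A * B \<in> carrier_mat n n"
  by (rule mult_carrier_mat)

lemma assoc_sq: "A \<in> carrier_mat n n \<Longrightarrow> B \<in> carrier_mat n n \<Longrightarrow> C \<in> carrier_mat n n \<Longrightarrow> A * B * C = A * (B * C)"
  by (rule assoc_mult_mat)

definition ip :: "complex vec \<Rightarrow> complex vec \<Rightarrow> complex" where
  "ip x y = (\<Sum>i<dim_vec x. cnj (x $ i) * y $ i)"

definition unitary :: "nat \<Rightarrow> complex mat \<Rightarrow> bool" where
  "unitary n U \<longleftrightarrow> U \<in> carrier_mat n n \<and> cadj U * U = 1\<^sub>m n \<and> U * cadj U = 1\<^sub>m n"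

definition sp :: "nat \<Rightarrow> complex mat \<Rightarrow> (nat \<Rightarrow> real) \<Rightarrow> complex mat" where
  "sp n U d = mat n n (\<lambda>(a,b). \<Sum>k<n. U $$ (a,k) * complex_of_real (d k) * cnj (U $$ (b,k)))"

definition dm :: "nat \<Rightarrow> (nat \<Rightarrow> real) \<Rightarrow> complex mat" where
  "dm n d = mat n n (\<lambda>(i,j). if i = j then complex_of_real (d i) else 0)"

lemma sp_carrier[simp]: "sp n U d \<in> carrier_mat n n" and sp_dims[simp]: "dim_row (sp n U d) = n" "dim_col (sp n U d) = n"
  by (auto simp: sp_def)

lemma unitary_colsum:
  assumes "unitary n U" "i < n" "j < n"
  shows "(\<Sum>k<n. cnj (U $$ (k,i)) * U $$ (k,j)) = (if i = j then 1 else 0)"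
proof -
  have U: "U \<in> carrier_mat n n" using assms by (auto simp: unitary_def)
  have "(cadj U * U) $$ (i,j) = (if i = j then 1 else 0)" using assms by (auto simp: unitary_def)
  then show ?thesis using U assms by (simp add: mult_idx)
qed

lemma unitary_rowsum:
  assumes "unitary n U" "i < n" "j < n"
  shows "(\<Sum>k<n. U $$ (i,k) * cnj (U $$ (j,k))) = (if i = j then 1 else 0)"
proof -
  have U: "U \<in> carrier_mat n n" using assms by (auto simp: unitary_def)
  have "(U * cadj U) $$ (i,j) = (if i = j then 1 else 0)" using assms by (auto simp: unitary_def)
  then show ?thesis using U assms by (simp add: mult_idx)
qed

lemma unitaryI:
  assumes U: "U \<in> carrier_mat n n"
    and c: "\<And>i j. i < n \<Longrightarrow> j < n \<Longrightarrow> (\<Sum>k<n. cnj (U $$ (k,i)) * U $$ (k,j)) = (if i = j then 1 else 0)"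
  shows "unitary n U"
proof -
  have 1: "cadj U * U = 1\<^sub>m n"
    by (rule eq_matI) (use U c in \<open>auto simp: mult_idx\<close>)
  have "U * cadj U = 1\<^sub>m n"
    by (rule mat_mult_left_right_inverse[OF _ U 1]) (use U in auto)
  with 1 U show ?thesis by (auto simp: unitary_def)
qed

lemma sp_prod:
  assumes U: "U \<in> carrier_mat n n"
  shows "sp n U d = U * dm n d * cadj U"
proof (rule eq_matI)
  fix a b assume ab: "a < dim_row (U * dm n d * cadj U)" "b < dim_col (U * dm n d * cadj U)"
  then have a: "a < n" and b: "b < n" using U by auto
  have inner: "(U * dm n d) $$ (a,k) = U $$ (a,k) * complex_of_real (d k)" if k: "k < n" for k
  proof -
    have "(U * dm n d) $$ (a,k) = (\<Sum>j<n. U $$ (a,j) * (if j = k then complex_of_real (d j) else 0))"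
      using U a k by (simp add: mult_idx dm_def)
    also have "\<dots> = U $$ (a,k) * complex_of_real (d k)"
      using k by (simp add: if_distrib sum.delta cong: if_cong)
    finally show ?thesis .
  qed
  have "(U * dm n d * cadj U) $$ (a,b) = (\<Sum>k<n. (U * dm n d) $$ (a,k) * cnj (U $$ (b,k)))"
    using U a b by (simp add: mult_idx dm_def)
  also have "\<dots> = sp n U d $$ (a,b)"
    using a b by (simp add: inner sp_def)
  finally show "sp n U d $$ (a,b) = (U * dm n d * cadj U) $$ (a,b)" by simp
qed (use U in auto)

lemma dm_carrier[simp]: "dm n d \<in> carrier_mat n n" by (simp add: dm_def)

lemma unitary_mult:
  assumes "unitary n U" "unitary n V"
  shows "unitary n (U * V)"
proof -
  have U: "U \<in> carrier_mat n n" and V: "V \<in> carrier_mat n n" using assms by (auto simp: unitary_def)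
  have "cadj (U * V) * (U * V) = cadj V * (cadj U * U) * V"
    using U V by (simp add: cadj_mult assoc_sq[of _ n])
  also have "\<dots> = 1\<^sub>m n" using assms U V by (simp add: unitary_def)
  finally have 1: "cadj (U * V) * (U * V) = 1\<^sub>m n" .
  have "U * V * cadj (U * V) = U * (V * cadj V) * cadj U"
    using U V by (simp add: cadj_mult assoc_sq[of _ n])
  also have "\<dots> = 1\<^sub>m n" using assms U V by (simp add: unitary_def)
  finally show ?thesis using 1 U V by (simp add: unitary_def)
qed

lemma sp_conj:
  assumes W: "unitary n W" and V: "V \<in> carrier_mat n n"
  shows "W * sp n V d * cadj W = sp n (W * V) d"
proof -
  have Wc: "W \<in> carrier_mat n n" using W by (simp add: unitary_def)
  have "W * sp n V d * cadj W = W * (V * dm n d * cadj V) * cadj W" using V by (simp add: sp_prod)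
  also have "\<dots> = (W * V) * dm n d * (cadj V * cadj W)"
    using Wc V by (simp add: assoc_sq[of _ n])
  also have "\<dots> = sp n (W * V) d"
    using Wc V by (simp add: sp_prod cadj_mult)
  finally show ?thesis .
qed



lemma conj_complex[simp]: "conjugate (x::complex) = cnj x"
  by (simp add: conjugate_complex_def)

lemma eigen_exists:
  assumes A: "(A::complex mat) \<in> carrier_mat n n" and n: "n > 0"
  shows "\<exists>e v. v \<in> carrier_vec n \<and> v \<noteq> 0\<^sub>v n \<and> A *\<^sub>v v = e \<cdot>\<^sub>v v"
proof -
  obtain as where cp: "char_poly A = (\<Prod>a\<leftarrow>as. [:- a, 1:])" and len: "length as = n"
    using char_poly_factorized[OF A] by blast
  define e where "e = as ! 0"
  have "e \<in> set as" using len n by (simp add: e_def)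
  then have "poly (char_poly A) e = 0"
    unfolding cp by (subst poly_prod_list_zero_iff) (auto intro!: bexI[of _ "[:- e, 1:]"])
  then have "eigenvalue A e" using eigenvalue_root_char_poly[OF A] by simp
  then obtain v where "eigenvector A v e" by (auto simp: eigenvalue_def)
  then show ?thesis using A by (auto simp: eigenvector_def)
qed

lemma ip_sprod: "v \<in> carrier_vec n \<Longrightarrow> w \<in> carrier_vec n \<Longrightarrow> w \<bullet>c v = ip v w"
  by (auto simp: ip_def scalar_prod_def atLeast0LessThan mult.commute)

lemma ip_self_real: "ip v v = complex_of_real (\<Sum>i<dim_vec v. (cmod (v $ i))\<^sup>2)"
  unfolding ip_def of_real_sum
proof (rule sum.cong)
  fix x show "cnj (v $ x) * v $ x = complex_of_real ((cmod (v $ x))\<^sup>2)"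
    using complex_norm_square[of "v $ x"] by (simp only: mult.commute)
qed simp

lemma ip_self_nonneg: "\<exists>s\<ge>0. ip v v = complex_of_real s"
  using ip_self_real[of v] by (intro exI[of _ "\<Sum>i<dim_vec v. (cmod (v $ i))\<^sup>2"]) (auto intro: sum_nonneg)

lemma exists_unitary_first_col:
  assumes v: "v \<in> carrier_vec n" and vv: "ip v v = 1"
  shows "\<exists>W. unitary n W \<and> (\<forall>i<n. W $$ (i,0) = v $ i)"
proof -
  have v0: "v \<noteq> 0\<^sub>v n" using vv v by (auto simp: ip_def)
  interpret cof_vec_space n "TYPE(complex)" .
  define b where "b = basis_completion v"
  from basis_completion[OF v v0, folded b_def]
  have dist_b: "distinct b" and indep: "\<not> lin_dep (set b)" and bc: "set b \<subseteq> carrier_vec n"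
    and hdb: "hd b = v" and len_b: "length b = n" by auto
  have n: "n > 0" using v0 len_b hdb v by (cases b) auto
  from hdb len_b n obtain vs where bv: "b = v # vs" by (cases b, auto)
  define ws where "ws = gram_schmidt n b"
  from gram_schmidt_result[OF bc dist_b indep refl, folded ws_def]
  have wsc: "set ws \<subseteq> carrier_vec n" and orth: "corthogonal ws" and lws: "length ws = n"
    by (auto simp: len_b)
  have hdws: "hd ws = v" unfolding ws_def bv by (rule gram_schmidt_hd[OF v])
  define c where "c j = 1 / sqrt (Re (ip (ws ! j) (ws ! j)))" for j
  define W where "W = mat n n (\<lambda>(i,j). complex_of_real (c j) * (ws ! j $ i))"
  have wj: "ws ! j \<in> carrier_vec n" if "j < n" for j using wsc lws that by auto
  have ipo: "ip (ws ! i) (ws ! j) = (if i = j then ip (ws ! i) (ws ! i) else 0)" if "i < n" "j < n" for i j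
    using corthogonalD[OF orth, of j i] that lws ip_sprod[OF wj[of i] wj[of j]] by auto
  have ippos: "Re (ip (ws ! i) (ws ! i)) > 0" "ip (ws ! i) (ws ! i) = complex_of_real (Re (ip (ws ! i) (ws ! i)))" if "i < n" for i
  proof -
    have "ip (ws ! i) (ws ! i) \<noteq> 0"
      using corthogonalD[OF orth, of i i] that lws ip_sprod[OF wj[of i] wj[of i]] by auto
    moreover obtain s where "s \<ge> 0" "ip (ws ! i) (ws ! i) = complex_of_real s"
      using ip_self_nonneg by blast
    ultimately show "Re (ip (ws ! i) (ws ! i)) > 0" "ip (ws ! i) (ws ! i) = complex_of_real (Re (ip (ws ! i) (ws ! i)))"
      by auto
  qed
  have Wc: "W \<in> carrier_mat n n" by (simp add: W_def)
  have "unitary n W"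
  proof (rule unitaryI[OF Wc])
    fix i j assume i: "i < n" and j: "j < n"
    have "(\<Sum>k<n. cnj (W $$ (k,i)) * W $$ (k,j)) = complex_of_real (c i * c j) * ip (ws ! i) (ws ! j)"
      using wj[OF i] i j by (simp add: W_def ip_def sum_distrib_left algebra_simps)
    also have "\<dots> = (if i = j then 1 else 0)"
    proof (cases "i = j")
      case True
      have r: "Re (ip (ws ! i) (ws ! i)) > 0" using ippos[OF i] by simp
      have "complex_of_real (c i * c j) * ip (ws ! i) (ws ! j) = complex_of_real (c i * c i * Re (ip (ws ! i) (ws ! i)))"
        using True ippos(2)[OF i] by (metis of_real_mult)
      also have "c i * c i * Re (ip (ws ! i) (ws ! i)) = 1"
        using r by (simp add: c_def field_simps)
      finally show ?thesis using True by simp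
    qed (use ipo i j in auto)
    finally show "(\<Sum>k<n. cnj (W $$ (k,i)) * W $$ (k,j)) = (if i = j then 1 else 0)" .
  qed
  moreover have "W $$ (i,0) = v $ i" if "i < n" for i
  proof -
    have w0: "ws ! 0 = v" using hdws lws n by (cases ws) auto
    have "c 0 = 1" using vv by (simp add: c_def w0)
    then show ?thesis using that n by (simp add: W_def w0)
  qed
  ultimately show ?thesis by blast
qed



lemma hermitian_idx: "hermitian n A \<Longrightarrow> i < n \<Longrightarrow> j < n \<Longrightarrow> A $$ (i,j) = cnj (A $$ (j,i))"
  unfolding hermitian_def by (metis carrier_matD cadj_idx)

lemma hermitianI:
  assumes A: "A \<in> carrier_mat n n" and h: "\<And>i j. i < n \<Longrightarrow> j < n \<Longrightarrow> A $$ (i,j) = cnj (A $$ (j,i))"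
  shows "hermitian n A"
proof -
  have "cadj A = A"
  proof (rule eq_matI)
    fix i j assume "i < dim_row A" "j < dim_col A"
    then show "cadj A $$ (i,j) = A $$ (i,j)" using A h[of i j] by simp
  qed (use A in auto)
  then show ?thesis using A by (simp add: hermitian_def)
qed

lemma ip_smult: "ip (c \<cdot>\<^sub>v v) (c \<cdot>\<^sub>v v) = cnj c * c * ip v v"
  by (simp add: ip_def sum_distrib_left algebra_simps)

theorem spectral:
  "hermitian n A \<Longrightarrow> \<exists>U d. unitary n U \<and> A = sp n U d"
proof (induction n arbitrary: A)
  case 0
  then have A: "A \<in> carrier_mat 0 0" by (simp add: hermitian_def)
  have "unitary 0 (1\<^sub>m 0)" by (simp add: unitary_def)
  moreover have "A = sp 0 (1\<^sub>m 0) (\<lambda>_. 0)" using A by (intro eq_matI) auto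
  ultimately show ?case by blast
next
  case (Suc m A)
  let ?n = "Suc m"
  have A: "A \<in> carrier_mat ?n ?n" using Suc.prems by (simp add: hermitian_def)
  obtain e v where v: "v \<in> carrier_vec ?n" and v0: "v \<noteq> 0\<^sub>v ?n" and ev: "A *\<^sub>v v = e \<cdot>\<^sub>v v"
    using eigen_exists[OF A] by blast
  obtain s where s: "s \<ge> 0" "ip v v = complex_of_real s" using ip_self_nonneg by blast
  have "s \<noteq> 0"
  proof
    assume "s = 0"
    then have "v \<bullet>c v = 0" using ip_sprod[OF v v] s by simp
    then show False using v v0 by simp
  qed
  with s have spos: "s > 0" by simp
  define v1 where "v1 = complex_of_real (1 / sqrt s) \<cdot>\<^sub>v v"
  have v1: "v1 \<in> carrier_vec ?n" using v by (simp add: v1_def)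
  have "ip v1 v1 = cnj (complex_of_real (1 / sqrt s)) * complex_of_real (1 / sqrt s) * ip v v"
    unfolding v1_def by (rule ip_smult)
  also have "\<dots> = complex_of_real (1 / sqrt s * (1 / sqrt s) * s)" using s(2) by (simp only: complex_cnj_complex_of_real of_real_mult)
  also have "1 / sqrt s * (1 / sqrt s) * s = 1" using spos by (simp add: field_simps)
  also have "complex_of_real 1 = 1" by simp
  finally have v1v1: "ip v1 v1 = 1" .
  have ev1: "(A *\<^sub>v v1) $ k = e * v1 $ k" if "k < ?n" for k
  proof -
    have "(A *\<^sub>v v1) = complex_of_real (1 / sqrt s) \<cdot>\<^sub>v (A *\<^sub>v v)"
      unfolding v1_def using A v by (simp add: mult_mat_vec)
    then show ?thesis using ev that v by (simp add: v1_def)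
  qed
  obtain W where W: "unitary ?n W" and W0: "\<And>i. i < ?n \<Longrightarrow> W $$ (i,0) = v1 $ i"
    using exists_unitary_first_col[OF v1 v1v1] by blast
  have Wc: "W \<in> carrier_mat ?n ?n" using W by (simp add: unitary_def)
  define A' where "A' = cadj W * (A * W)"
  have A'c: "A' \<in> carrier_mat ?n ?n" using Wc A by (simp add: A'_def)
  have herA: "cadj A = A" using Suc.prems by (simp add: hermitian_def)
  have hA': "hermitian ?n A'"
  proof -
    have "cadj A' = cadj (A * W) * cadj (cadj W)" unfolding A'_def
      by (rule cadj_mult[of _ ?n ?n _ ?n]) (use Wc A in auto)
    also have "\<dots> = cadj W * A * W" using Wc A by (simp add: cadj_mult[of A ?n ?n W ?n] herA)
    also have "\<dots> = A'" using Wc A by (simp add: A'_def assoc_sq[of _ ?n])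
    finally show ?thesis using A'c by (simp add: hermitian_def)
  qed
  have AW0: "(A * W) $$ (k,0) = e * W $$ (k,0)" if "k < ?n" for k
  proof -
    have "(A * W) $$ (k,0) = (A *\<^sub>v v1) $ k"
      using A Wc that v1 W0 by (simp add: mult_idx)
    then show ?thesis using ev1 that W0 by simp
  qed
  have col0: "A' $$ (i,0) = (if i = 0 then e else 0)" if "i < ?n" for i
  proof -
    have "A' $$ (i,0) = (\<Sum>k<?n. cadj W $$ (i,k) * (A * W) $$ (k,0))"
      using that A Wc unfolding A'_def by (subst mult_idx) auto
    also have "\<dots> = (\<Sum>k<?n. cnj (W $$ (k,i)) * (e * W $$ (k,0)))"
      using that Wc by (intro sum.cong) (auto simp del: mult_idx simp add: AW0)
    also have "\<dots> = e * (\<Sum>k<?n. cnj (W $$ (k,i)) * W $$ (k,0))"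
      by (simp add: sum_distrib_left algebra_simps)
    also have "\<dots> = (if i = 0 then e else 0)" using unitary_colsum[OF W that, of 0] by simp
    finally show ?thesis .
  qed
  have row0: "A' $$ (0,j) = (if j = 0 then cnj e else 0)" if "j < ?n" for j
    using hermitian_idx[OF hA' _ that, of 0] col0[OF that] by simp
  have ec: "cnj e = e" using col0[of 0] row0[of 0] by simp
  have "Im e = 0" using arg_cong[OF ec, of Im] by simp
  then have ereal: "e = complex_of_real (Re e)" by (simp add: complex_eq_iff)
  define B where "B = mat m m (\<lambda>(i,j). A' $$ (Suc i, Suc j))"
  have hB: "hermitian m B"
    by (rule hermitianI) (auto simp: B_def intro: hermitian_idx[OF hA'])
  obtain U3 d3 where U3: "unitary m U3" and B3: "B = sp m U3 d3" using Suc.IH[OF hB] by blast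
  have U3c: "U3 \<in> carrier_mat m m" using U3 by (simp add: unitary_def)
  define U' where "U' = mat ?n ?n (\<lambda>(i,j). if i = 0 \<and> j = 0 then 1 else if i = 0 \<or> j = 0 then 0 else U3 $$ (i - 1, j - 1))"
  define d where "d = case_nat (Re e) d3"
  have U'c: "U' \<in> carrier_mat ?n ?n" by (simp add: U'_def)
  have U'u: "unitary ?n U'"
  proof (rule unitaryI[OF U'c])
    fix i j assume i: "i < ?n" and j: "j < ?n"
    have "(\<Sum>k<?n. cnj (U' $$ (k,i)) * U' $$ (k,j)) = cnj (U' $$ (0,i)) * U' $$ (0,j) + (\<Sum>k<m. cnj (U' $$ (Suc k,i)) * U' $$ (Suc k,j))"
      by (rule sum.lessThan_Suc_shift)
    also have "\<dots> = (if i = j then 1 else 0)"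
    proof (cases i)
      case 0 then show ?thesis using j by (cases j) (auto simp: U'_def)
    next
      case (Suc i')
      then show ?thesis using i j
        by (cases j) (auto simp: U'_def unitary_colsum[OF U3])
    qed
    finally show "(\<Sum>k<?n. cnj (U' $$ (k,i)) * U' $$ (k,j)) = (if i = j then 1 else 0)" .
  qed
  have A'sp: "A' = sp ?n U' d"
  proof (rule eq_matI)
    fix i j assume "i < dim_row (sp ?n U' d)" "j < dim_col (sp ?n U' d)"
    then have i: "i < ?n" and j: "j < ?n" by auto
    have "sp ?n U' d $$ (i,j) = U' $$ (i,0) * complex_of_real (d 0) * cnj (U' $$ (j,0)) + (\<Sum>k<m. U' $$ (i,Suc k) * complex_of_real (d (Suc k)) * cnj (U' $$ (j,Suc k)))"
      using i j unfolding sp_def by (simp del: sum.lessThan_Suc) (rule sum.lessThan_Suc_shift)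
    also have "\<dots> = A' $$ (i,j)"
    proof (cases i)
      case 0 then show ?thesis using j row0 ereal ec by (cases j) (auto simp: U'_def d_def)
    next
      case (Suc i')
      show ?thesis
      proof (cases j)
        case 0 then show ?thesis using i col0 Suc by (auto simp: U'_def d_def)
      next
        case (Suc j')
        have "B $$ (i',j') = A' $$ (i,j)" using \<open>i = Suc i'\<close> Suc i j by (simp add: B_def)
        then show ?thesis using \<open>i = Suc i'\<close> Suc i j by (simp add: B3 sp_def U'_def d_def)
      qed
    qed
    finally show "A' $$ (i,j) = sp ?n U' d $$ (i,j)" by simp
  qed (use A'c in auto)
  have "A = W * A' * cadj W"
  proof -
    have "W * A' * cadj W = (W * cadj W) * A * (W * cadj W)"
      using Wc A by (simp add: A'_def assoc_sq[of _ ?n])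
    also have "\<dots> = A" using W A by (simp add: unitary_def)
    finally show ?thesis by simp
  qed
  also have "\<dots> = sp ?n (W * U') d" unfolding A'sp by (rule sp_conj[OF W U'c])
  finally show ?case using unitary_mult[OF W U'u] by blast
qed



lemma sp_idx[simp]: "a < n \<Longrightarrow> b < n \<Longrightarrow> sp n U d $$ (a,b) = (\<Sum>k<n. U $$ (a,k) * complex_of_real (d k) * cnj (U $$ (b,k)))"
  by (simp add: sp_def)

lemma ip_mat:
  assumes x: "x \<in> carrier_vec n" and A: "A \<in> carrier_mat n n"
  shows "ip x (A *\<^sub>v x) = (\<Sum>a<n. \<Sum>b<n. cnj (x $ a) * A $$ (a,b) * x $ b)"
  unfolding ip_def using x A by (auto intro!: sum.cong simp: sum_distrib_left mult.assoc)

lemma sp_qf: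
  assumes x: "x \<in> carrier_vec n" and U: "U \<in> carrier_mat n n"
  shows "ip x (sp n U d *\<^sub>v x) = (\<Sum>k<n. complex_of_real (d k) * (cnj (ip (col U k) x) * ip (col U k) x))"
proof -
  have "ip x (sp n U d *\<^sub>v x) = (\<Sum>a<n. \<Sum>b<n. \<Sum>k<n. cnj (x $ a) * U $$ (a,k) * complex_of_real (d k) * cnj (U $$ (b,k)) * x $ b)"
    unfolding ip_mat[OF x sp_carrier] by (intro sum.cong refl) (simp add: sum_distrib_left sum_distrib_right mult.assoc)
  also have "\<dots> = (\<Sum>a<n. \<Sum>k<n. \<Sum>b<n. cnj (x $ a) * U $$ (a,k) * complex_of_real (d k) * cnj (U $$ (b,k)) * x $ b)"
    by (rule sum.cong[OF refl], rule sum.swap)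
  also have "\<dots> = (\<Sum>k<n. \<Sum>a<n. \<Sum>b<n. cnj (x $ a) * U $$ (a,k) * complex_of_real (d k) * cnj (U $$ (b,k)) * x $ b)"
    by (rule sum.swap)
  also have "\<dots> = (\<Sum>k<n. complex_of_real (d k) * (cnj (ip (col U k) x) * ip (col U k) x))"
  proof (rule sum.cong[OF refl])
    fix k assume k: "k \<in> {..<n}"
    have "cnj (ip (col U k) x) = (\<Sum>a<n. cnj (x $ a) * U $$ (a,k))" using x U k by (simp add: ip_def mult.commute)
    moreover have "ip (col U k) x = (\<Sum>b<n. cnj (U $$ (b,k)) * x $ b)" using x U k by (simp add: ip_def)
    ultimately have "complex_of_real (d k) * (cnj (ip (col U k) x) * ip (col U k) x) =
        complex_of_real (d k) * ((\<Sum>a<n. cnj (x $ a) * U $$ (a,k)) * (\<Sum>b<n. cnj (U $$ (b,k)) * x $ b))"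
      by simp
    also have "\<dots> = (\<Sum>a<n. \<Sum>b<n. cnj (x $ a) * U $$ (a,k) * complex_of_real (d k) * cnj (U $$ (b,k)) * x $ b)"
      by (simp only: sum_product, simp only: sum_distrib_left) (intro sum.cong refl, simp add: ac_simps)
    finally show "(\<Sum>a<n. \<Sum>b<n. cnj (x $ a) * U $$ (a,k) * complex_of_real (d k) * cnj (U $$ (b,k)) * x $ b) =
        complex_of_real (d k) * (cnj (ip (col U k) x) * ip (col U k) x)" by simp
  qed
  finally show ?thesis .
qed

lemma cnj_mult_self: "cnj z * z = complex_of_real ((cmod z)\<^sup>2)"
  using complex_norm_square[of z] by (simp add: mult.commute)

lemma sp_qf_real:
  assumes x: "x \<in> carrier_vec n" and U: "U \<in> carrier_mat n n"
  shows "ip x (sp n U d *\<^sub>v x) = complex_of_real (\<Sum>k<n. d k * (cmod (ip (col U k) x))\<^sup>2)"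
  unfolding sp_qf[OF x U] of_real_sum by (simp add: cnj_mult_self)

lemma sp_hermitian: "hermitian n (sp n U d)"
  by (rule hermitianI) (auto simp: mult.commute mult.left_commute)

lemma psd_def': "psd n A \<longleftrightarrow> hermitian n A \<and> (\<forall>v\<in>carrier_vec n. 0 \<le> Re (ip v (A *\<^sub>v v)))"
proof -
  have "(\<Sum>i<n. cnj (v $ i) * (A *\<^sub>v v) $ i) = ip v (A *\<^sub>v v)" if "v \<in> carrier_vec n" for v
    using that by (simp add: ip_def)
  then show ?thesis unfolding psd_def by auto
qed

lemma psd_sp:
  assumes U: "U \<in> carrier_mat n n" and d: "\<And>k. k < n \<Longrightarrow> d k \<ge> 0"
  shows "psd n (sp n U d)"
  unfolding psd_def'
proof (intro conjI ballI sp_hermitian)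
  fix v :: "complex vec" assume v: "v \<in> carrier_vec n"
  show "0 \<le> Re (ip v (sp n U d *\<^sub>v v))"
    unfolding sp_qf_real[OF v U] using d by (simp, intro sum_nonneg) auto
qed

lemma col_ip_unitary:
  assumes U: "unitary n U" and k: "k < n" and l: "l < n"
  shows "ip (col U l) (col U k) = (if l = k then 1 else 0)"
proof -
  have Uc: "U \<in> carrier_mat n n" using U by (simp add: unitary_def)
  show ?thesis using unitary_colsum[OF U l k] Uc l k by (simp add: ip_def)
qed

lemma sp_qf_col:
  assumes U: "unitary n U" and k: "k < n"
  shows "ip (col U k) (sp n U d *\<^sub>v col U k) = complex_of_real (d k)"
proof -
  have Uc: "U \<in> carrier_mat n n" using U by (simp add: unitary_def)
  have "ip (col U k) (sp n U d *\<^sub>v col U k) = (\<Sum>l<n. complex_of_real (d l) * (cnj (ip (col U l) (col U k)) * ip (col U l) (col U k)))"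
    using Uc k by (intro sp_qf) auto
  also have "\<dots> = (\<Sum>l<n. if l = k then complex_of_real (d k) else 0)"
    by (intro sum.cong) (auto simp: col_ip_unitary[OF U k])
  also have "\<dots> = complex_of_real (d k)" using k by simp
  finally show ?thesis .
qed

lemma psd_sp_nonneg:
  assumes U: "unitary n U" and p: "psd n (sp n U d)" and k: "k < n"
  shows "d k \<ge> 0"
proof -
  have Uc: "U \<in> carrier_mat n n" using U by (simp add: unitary_def)
  have "0 \<le> Re (ip (col U k) (sp n U d *\<^sub>v col U k))"
    using p Uc unfolding psd_def' by auto
  then show ?thesis using sp_qf_col[OF U k] by simp
qed

lemma dm_dims[simp]: "dim_row (dm n d) = n" "dim_col (dm n d) = n"
  by (auto simp: dm_def)

lemma dm_mult: "dm n a * dm n b = dm n (\<lambda>k. a k * b k)"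
proof (rule eq_matI)
  fix i j assume ij: "i < dim_row (dm n (\<lambda>k. a k * b k))" "j < dim_col (dm n (\<lambda>k. a k * b k))"
  then have i: "i < n" and j: "j < n" by (auto simp: dm_def)
  have "(dm n a * dm n b) $$ (i,j) = (\<Sum>k<n. (if i = k then complex_of_real (a i) else 0) * (if k = j then complex_of_real (b k) else 0))"
    using i j by (simp add: dm_def)
  also have "\<dots> = (\<Sum>k<n. if k = i then (if i = j then complex_of_real (a i * b i) else 0) else 0)"
    by (intro sum.cong) auto
  also have "\<dots> = dm n (\<lambda>k. a k * b k) $$ (i,j)" using i j by (simp add: dm_def)
  finally show "(dm n a * dm n b) $$ (i,j) = dm n (\<lambda>k. a k * b k) $$ (i,j)" .
qed (auto simp: dm_def)

lemma sp_mult: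
  assumes U: "unitary n U"
  shows "sp n U a * sp n U b = sp n U (\<lambda>k. a k * b k)"
proof -
  have Uc: "U \<in> carrier_mat n n" using U by (simp add: unitary_def)
  have "sp n U a * sp n U b = U * dm n a * (cadj U * U) * dm n b * cadj U"
    using Uc by (simp add: sp_prod assoc_sq[of _ n])
  also have "\<dots> = U * (dm n a * dm n b) * cadj U"
    using Uc U by (simp add: unitary_def assoc_sq[of _ n])
  also have "\<dots> = sp n U (\<lambda>k. a k * b k)" using Uc by (simp add: dm_mult sp_prod)
  finally show ?thesis .
qed

lemma sp_one:
  assumes U: "unitary n U"
  shows "sp n U (\<lambda>_. 1) = 1\<^sub>m n"
  by (rule eq_matI) (use unitary_rowsum[OF U] in auto)

lemma sp_add: "sp n U a + sp n U b = sp n U (\<lambda>k. a k + b k)"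
  by (rule eq_matI) (simp_all add: sum.distrib distrib_left distrib_right)

lemma sp_minus: "sp n U a - sp n U b = sp n U (\<lambda>k. a k - b k)"
  by (rule eq_matI) (simp_all add: sum_subtractf left_diff_distrib right_diff_distrib)

lemma sp_smult: "complex_of_real c \<cdot>\<^sub>m sp n U a = sp n U (\<lambda>k. c * a k)"
  by (rule eq_matI) (auto simp: sum_distrib_left algebra_simps)

lemma sp_cong: "(\<And>k. k < n \<Longrightarrow> a k = b k) \<Longrightarrow> sp n U a = sp n U b"
  unfolding sp_def by (intro eq_matI) auto

lemma trace_mult_sp:
  assumes M: "M \<in> carrier_mat n n" and U: "U \<in> carrier_mat n n"
  shows "trace (M * sp n U d) = (\<Sum>k<n. complex_of_real (d k) * ip (col U k) (M *\<^sub>v col U k))"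
proof -
  have "trace (M * sp n U d) = (\<Sum>a<n. \<Sum>b<n. M $$ (a,b) * (\<Sum>k<n. U $$ (b,k) * complex_of_real (d k) * cnj (U $$ (a,k))))"
    using M by (simp add: trace_def)
  also have "\<dots> = (\<Sum>a<n. \<Sum>b<n. \<Sum>k<n. complex_of_real (d k) * (cnj (U $$ (a,k)) * (M $$ (a,b) * U $$ (b,k))))"
    by (simp add: sum_distrib_left algebra_simps)
  also have "\<dots> = (\<Sum>a<n. \<Sum>k<n. \<Sum>b<n. complex_of_real (d k) * (cnj (U $$ (a,k)) * (M $$ (a,b) * U $$ (b,k))))"
    by (rule sum.cong[OF refl], rule sum.swap)
  also have "\<dots> = (\<Sum>k<n. \<Sum>a<n. \<Sum>b<n. complex_of_real (d k) * (cnj (U $$ (a,k)) * (M $$ (a,b) * U $$ (b,k))))"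
    by (rule sum.swap)
  also have "\<dots> = (\<Sum>k<n. complex_of_real (d k) * ip (col U k) (M *\<^sub>v col U k))"
    using M U by (simp add: ip_def sum_distrib_left)
  finally show ?thesis .
qed

lemma trace_sp:
  assumes U: "unitary n U"
  shows "trace (sp n U d) = (\<Sum>k<n. complex_of_real (d k))"
proof -
  have Uc: "U \<in> carrier_mat n n" using U by (simp add: unitary_def)
  have "trace (sp n U d) = trace (1\<^sub>m n * sp n U d)" using Uc by simp
  also have "\<dots> = (\<Sum>k<n. complex_of_real (d k) * ip (col U k) (1\<^sub>m n *\<^sub>v col U k))"
    using Uc by (intro trace_mult_sp) auto
  also have "\<dots> = (\<Sum>k<n. complex_of_real (d k))"
    using col_ip_unitary[OF U] Uc by (intro sum.cong) auto
  finally show ?thesis .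
qed

lemma sp_pow:
  assumes U: "unitary n U"
  shows "sp n U d ^\<^sub>m m = sp n U (\<lambda>k. d k ^ m)"
proof (induction m)
  case 0 then show ?case using sp_one[OF U] by simp
next
  case (Suc m)
  then show ?case using sp_mult[OF U] by (simp add: mult.commute)
qed

lemma exp_series_real:
  "(\<lambda>m. (complex_of_real t) ^ m / of_nat (fact m)) sums complex_of_real (exp t)"
proof -
  have "(\<lambda>m. (complex_of_real t) ^ m /\<^sub>R fact m) sums exp (complex_of_real t)"
    by (rule exp_converges)
  moreover have "(complex_of_real t) ^ m /\<^sub>R fact m = (complex_of_real t) ^ m / of_nat (fact m)" for m
    by (simp add: scaleR_conv_of_real divide_inverse mult.commute)
  ultimately show ?thesis by (simp add: exp_of_real)
qed

lemma mat_exp_sp: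
  assumes U: "unitary n U"
  shows "mat_exp (sp n U d) = sp n U (\<lambda>k. exp (d k))"
proof (rule eq_matI)
  fix a b assume "a < dim_row (sp n U (\<lambda>k. exp (d k)))" "b < dim_col (sp n U (\<lambda>k. exp (d k)))"
  then have a: "a < n" and b: "b < n" by auto
  have "(\<lambda>m. (sp n U d ^\<^sub>m m) $$ (a,b) / of_nat (fact m)) sums sp n U (\<lambda>k. exp (d k)) $$ (a,b)"
  proof -
    have "(\<lambda>m. \<Sum>k<n. U $$ (a,k) * cnj (U $$ (b,k)) * ((complex_of_real (d k)) ^ m / of_nat (fact m)))
       sums (\<Sum>k<n. U $$ (a,k) * cnj (U $$ (b,k)) * complex_of_real (exp (d k)))"
      by (intro sums_sum sums_mult exp_series_real)
    moreover have "(sp n U d ^\<^sub>m m) $$ (a,b) / of_nat (fact m) = (\<Sum>k<n. U $$ (a,k) * cnj (U $$ (b,k)) * ((complex_of_real (d k)) ^ m / of_nat (fact m)))" for m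
      using a b by (simp add: sp_pow[OF U] sum_divide_distrib algebra_simps)
    moreover have "sp n U (\<lambda>k. exp (d k)) $$ (a,b) = (\<Sum>k<n. U $$ (a,k) * cnj (U $$ (b,k)) * complex_of_real (exp (d k)))"
      using a b by (simp add: algebra_simps)
    ultimately show ?thesis by simp
  qed
  then show "mat_exp (sp n U d) $$ (a,b) = sp n U (\<lambda>k. exp (d k)) $$ (a,b)"
    using a b by (simp add: mat_exp_def sums_iff)
qed (auto simp: mat_exp_def)



lemma ip_add_right: "dim_vec y = dim_vec x \<Longrightarrow> dim_vec z = dim_vec x \<Longrightarrow> ip x (y + z) = ip x y + ip x z"
  by (simp add: ip_def sum.distrib algebra_simps)

lemma ip_add_left: "dim_vec y = dim_vec x \<Longrightarrow> dim_vec z = dim_vec x \<Longrightarrow> ip (y + z) x = ip y x + ip z x"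
  by (simp add: ip_def sum.distrib algebra_simps)

lemma ip_minus_right: "dim_vec y = dim_vec x \<Longrightarrow> dim_vec z = dim_vec x \<Longrightarrow> ip x (y - z) = ip x y - ip x z"
  by (simp add: ip_def sum_subtractf algebra_simps)

lemma ip_smult_right: "dim_vec y = dim_vec x \<Longrightarrow> ip x (c \<cdot>\<^sub>v y) = c * ip x y"
  by (simp add: ip_def sum_distrib_left algebra_simps)

lemma ip_smult_left: "ip (c \<cdot>\<^sub>v y) x = cnj c * ip y x"
  by (simp add: ip_def sum_distrib_left algebra_simps)

lemma ip_cnj: "dim_vec y = dim_vec x \<Longrightarrow> ip y x = cnj (ip x y)"
  by (simp add: ip_def mult.commute)

lemma ip_adj:
  assumes A: "A \<in> carrier_mat n n" and x: "x \<in> carrier_vec n" and y: "y \<in> carrier_vec n"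
  shows "ip x (A *\<^sub>v y) = ip (cadj A *\<^sub>v x) y"
proof -
  have "ip x (A *\<^sub>v y) = (\<Sum>a<n. \<Sum>b<n. cnj (x $ a) * A $$ (a,b) * y $ b)"
    using A x y by (simp add: ip_def sum_distrib_left mult.assoc)
  also have "\<dots> = (\<Sum>b<n. \<Sum>a<n. cnj (x $ a) * A $$ (a,b) * y $ b)" by (rule sum.swap)
  also have "\<dots> = ip (cadj A *\<^sub>v x) y"
    using A x y by (simp add: ip_def sum_distrib_right sum_distrib_left mult.commute mult.left_commute)
  finally show ?thesis .
qed

lemma ip_herm:
  assumes A: "hermitian n A" and x: "x \<in> carrier_vec n" and y: "y \<in> carrier_vec n"
  shows "ip x (A *\<^sub>v y) = ip (A *\<^sub>v x) y"
  using ip_adj[OF _ x y, of A] A by (simp add: hermitian_def)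

lemma herm_qf_real:
  assumes A: "hermitian n A" and x: "x \<in> carrier_vec n"
  shows "cnj (ip x (A *\<^sub>v x)) = ip x (A *\<^sub>v x)"
proof -
  have Ac: "A \<in> carrier_mat n n" using A by (simp add: hermitian_def)
  have "ip x (A *\<^sub>v x) = ip (A *\<^sub>v x) x" by (rule ip_herm[OF A x x])
  also have "\<dots> = cnj (ip x (A *\<^sub>v x))" using Ac x by (intro ip_cnj) auto
  finally show ?thesis by simp
qed

lemma herm_qf_ofreal:
  assumes A: "hermitian n A" and x: "x \<in> carrier_vec n"
  shows "ip x (A *\<^sub>v x) = complex_of_real (Re (ip x (A *\<^sub>v x)))"
proof -
  have "Im (ip x (A *\<^sub>v x)) = 0" using arg_cong[OF herm_qf_real[OF A x], of Im] by simp
  then show ?thesis by (simp add: complex_eq_iff)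
qed

lemma sp_eigen:
  assumes U: "unitary n U" and k: "k < n"
  shows "sp n U d *\<^sub>v col U k = complex_of_real (d k) \<cdot>\<^sub>v col U k"
proof -
  have Uc: "U \<in> carrier_mat n n" using U by (simp add: unitary_def)
  show ?thesis
  proof (rule eq_vecI)
    fix i assume "i < dim_vec (complex_of_real (d k) \<cdot>\<^sub>v col U k)"
    then have i: "i < n" using Uc by simp
    have "(sp n U d *\<^sub>v col U k) $ i = (\<Sum>b<n. (\<Sum>l<n. U $$ (i,l) * complex_of_real (d l) * cnj (U $$ (b,l))) * U $$ (b,k))"
      using i k Uc by simp
    also have "\<dots> = (\<Sum>b<n. \<Sum>l<n. U $$ (i,l) * complex_of_real (d l) * (cnj (U $$ (b,l)) * U $$ (b,k)))"
      by (simp add: sum_distrib_right mult.assoc)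
    also have "\<dots> = (\<Sum>l<n. \<Sum>b<n. U $$ (i,l) * complex_of_real (d l) * (cnj (U $$ (b,l)) * U $$ (b,k)))"
      by (rule sum.swap)
    also have "\<dots> = (\<Sum>l<n. U $$ (i,l) * complex_of_real (d l) * (\<Sum>b<n. cnj (U $$ (b,l)) * U $$ (b,k)))"
      by (simp add: sum_distrib_left)
    also have "\<dots> = (\<Sum>l<n. if l = k then U $$ (i,k) * complex_of_real (d k) else 0)"
      using k by (intro sum.cong) (auto simp: unitary_colsum[OF U])
    also have "\<dots> = (complex_of_real (d k) \<cdot>\<^sub>v col U k) $ i" using i k Uc by (simp add: mult.commute)
    finally show "(sp n U d *\<^sub>v col U k) $ i = (complex_of_real (d k) \<cdot>\<^sub>v col U k) $ i" .
  qed (use Uc in auto)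
qed

lemma psd_herm: "psd n A \<Longrightarrow> hermitian n A" by (simp add: psd_def)
lemma psd_carrier: "psd n A \<Longrightarrow> A \<in> carrier_mat n n" by (simp add: psd_def hermitian_def)
lemma psd_qf: "psd n A \<Longrightarrow> x \<in> carrier_vec n \<Longrightarrow> 0 \<le> Re (ip x (A *\<^sub>v x))" by (simp add: psd_def')

lemma herm_minus: "hermitian n A \<Longrightarrow> hermitian n B \<Longrightarrow> hermitian n (A - B)"
  unfolding hermitian_def using cadj_minus[of A n n B] by auto

lemma herm_add: "hermitian n A \<Longrightarrow> hermitian n B \<Longrightarrow> hermitian n (A + B)"
  unfolding hermitian_def using cadj_add[of A n n B] by auto

lemma psd_sq_mono:
  assumes B: "psd n B" and D: "psd n D" and DB: "psd n (D * D - B * B)"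
  shows "psd n (D - B)"
proof -
  have Bc: "B \<in> carrier_mat n n" and Dc: "D \<in> carrier_mat n n" using B D by (auto simp: psd_carrier)
  have hX: "hermitian n (D - B)" using B D by (intro herm_minus psd_herm)
  obtain U l where U: "unitary n U" and X: "D - B = sp n U l" using spectral[OF hX] by blast
  have Uc: "U \<in> carrier_mat n n" using U by (simp add: unitary_def)
  have "l k \<ge> 0" if k: "k < n" for k
  proof -
    define u where "u = col U k"
    have u: "u \<in> carrier_vec n" using Uc k by (simp add: u_def)
    have uu: "ip u u = 1" using col_ip_unitary[OF U k k] by (simp add: u_def)
    have Xu: "(D - B) *\<^sub>v u = complex_of_real (l k) \<cdot>\<^sub>v u" unfolding X u_def by (rule sp_eigen[OF U k])
    have Du: "D *\<^sub>v u = B *\<^sub>v u + complex_of_real (l k) \<cdot>\<^sub>v u"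
    proof (rule eq_vecI)
      fix i assume "i < dim_vec (B *\<^sub>v u + complex_of_real (l k) \<cdot>\<^sub>v u)"
      then have i: "i < n" using Bc u by simp
      have "((D - B) *\<^sub>v u) $ i = (D *\<^sub>v u) $ i - (B *\<^sub>v u) $ i"
        using Bc Dc u i by (simp add: minus_mult_distrib_mat_vec)
      then show "(D *\<^sub>v u) $ i = (B *\<^sub>v u + complex_of_real (l k) \<cdot>\<^sub>v u) $ i"
        using Xu i u Bc by (simp add: algebra_simps)
    qed (use Bc Dc u in auto)
    define b where "b = ip u (B *\<^sub>v u)"
    have bre: "b = complex_of_real (Re b)" unfolding b_def by (rule herm_qf_ofreal[OF psd_herm[OF B] u])
    have b0: "Re b \<ge> 0" unfolding b_def by (rule psd_qf[OF B u])
    obtain rb where rb: "b = complex_of_real rb" using bre by blast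
    have Bu: "B *\<^sub>v u \<in> carrier_vec n" using Bc u by simp
    have dBu: "dim_vec (B *\<^sub>v u) = n" and du: "dim_vec u = n" using Bc u by auto
    have bsym: "ip (B *\<^sub>v u) u = b" unfolding b_def using ip_herm[OF psd_herm[OF B] u u] by simp
    have "ip u ((D * D - B * B) *\<^sub>v u) = ip u (D *\<^sub>v (D *\<^sub>v u)) - ip u (B *\<^sub>v (B *\<^sub>v u))"
      using Bc Dc u by (simp add: minus_mult_distrib_mat_vec[of _ n n] ip_minus_right)
    also have "\<dots> = ip (D *\<^sub>v u) (D *\<^sub>v u) - ip (B *\<^sub>v u) (B *\<^sub>v u)"
      using ip_herm[OF psd_herm[OF D] u, of "D *\<^sub>v u"] ip_herm[OF psd_herm[OF B] u, of "B *\<^sub>v u"] Bc Dc u by simp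
    also have "ip (D *\<^sub>v u) (D *\<^sub>v u) = ip (B *\<^sub>v u) (B *\<^sub>v u) + complex_of_real (l k) * b + complex_of_real (l k) * b + complex_of_real (l k) * complex_of_real (l k)"
      unfolding Du using dBu du uu bsym
      by (simp add: ip_add_left ip_add_right ip_smult_left ip_smult_right b_def algebra_simps)
    finally have e1: "ip u ((D * D - B * B) *\<^sub>v u) = complex_of_real (2 * l k * Re b + l k * l k)"
      by (simp add: rb)
    have "0 \<le> Re (ip u ((D * D - B * B) *\<^sub>v u))" by (rule psd_qf[OF DB u])
    then have c1: "0 \<le> 2 * l k * Re b + l k * l k" using e1 by simp
    have "ip u (D *\<^sub>v u) = b + complex_of_real (l k)"
      unfolding Du using dBu du uu by (simp add: ip_add_right ip_smult_right b_def)
    moreover have "0 \<le> Re (ip u (D *\<^sub>v u))" by (rule psd_qf[OF D u])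
    ultimately have c2: "0 \<le> Re b + l k" by simp
    show "l k \<ge> 0"
    proof (rule ccontr)
      assume "\<not> l k \<ge> 0"
      then have neg: "l k < 0" by simp
      from c1 have "0 \<le> l k * (2 * Re b + l k)" by (simp add: algebra_simps)
      then have "2 * Re b + l k \<le> 0" using neg by (simp add: zero_le_mult_iff)
      then show False using c2 neg by simp
    qed
  qed
  then show ?thesis unfolding X by (intro psd_sp Uc) auto
qed



lemma psd_antisym:
  assumes CB: "psd n (C - B)" and BC: "psd n (B - C)"
    and B: "B \<in> carrier_mat n n" and C: "C \<in> carrier_mat n n"
  shows "B = C"
proof -
  obtain U l where U: "unitary n U" and X: "C - B = sp n U l" using spectral[OF psd_herm[OF CB]] by blast
  have BCsp: "B - C = sp n U (\<lambda>k. - l k)"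
  proof (rule eq_matI)
    fix i j assume "i < dim_row (sp n U (\<lambda>k. - l k))" "j < dim_col (sp n U (\<lambda>k. - l k))"
    then have i: "i < n" and j: "j < n" by auto
    have "(B - C) $$ (i,j) = - ((C - B) $$ (i,j))" using B C i j by simp
    also have "\<dots> = sp n U (\<lambda>k. - l k) $$ (i,j)" unfolding X using i j by (simp add: sum_negf[symmetric])
    finally show "(B - C) $$ (i,j) = sp n U (\<lambda>k. - l k) $$ (i,j)" .
  qed (use B C in auto)
  have l0: "l k = 0" if k: "k < n" for k
    using psd_sp_nonneg[OF U CB[unfolded X] k] psd_sp_nonneg[OF U BC[unfolded BCsp] k] by simp
  show ?thesis
  proof (rule eq_matI)
    fix i j assume ij: "i < dim_row C" "j < dim_col C"
    then have i: "i < n" and j: "j < n" using C by auto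
    have "(C - B) $$ (i,j) = 0" unfolding X using i j l0 by simp
    then show "B $$ (i,j) = C $$ (i,j)" using B C i j by simp
  qed (use B C in auto)
qed

lemma psd_zero: "psd n (0\<^sub>m n n)"
  unfolding psd_def' hermitian_def by (auto simp: ip_def intro!: eq_matI)

lemma psd_sqrt_unique:
  assumes B: "psd n B" and C: "psd n C" and e: "B * B = C * C"
  shows "B = C"
proof -
  have Bc: "B \<in> carrier_mat n n" and Cc: "C \<in> carrier_mat n n" using B C by (auto simp: psd_carrier)
  have z1: "C * C - B * B = 0\<^sub>m n n" using e Bc Cc by (intro eq_matI) auto
  have z2: "B * B - C * C = 0\<^sub>m n n" using e Bc Cc by (intro eq_matI) auto
  have "psd n (C - B)" using psd_sq_mono[OF B C] z1 psd_zero by simp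
  moreover have "psd n (B - C)" using psd_sq_mono[OF C B] z2 psd_zero by simp
  ultimately show ?thesis using psd_antisym Bc Cc by blast
qed

lemma psd_sqrt_eq:
  assumes M: "psd n M" and B: "psd n B" and e: "B * B = M"
  shows "psd_sqrt M = B"
proof -
  have dM: "dim_row M = n" using psd_carrier[OF M] by simp
  show ?thesis unfolding psd_sqrt_def dM
  proof (rule the_equality)
    show "psd n B \<and> B * B = M" using B e by simp
    fix B' assume "psd n B' \<and> B' * B' = M"
    then show "B' = B" using psd_sqrt_unique[of n B' B] B e by auto
  qed
qed

lemma psd_sqrt_sp:
  assumes U: "unitary n U" and d: "\<And>k. k < n \<Longrightarrow> d k \<ge> 0"
  shows "psd_sqrt (sp n U d) = sp n U (\<lambda>k. sqrt (d k))"
proof -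
  have Uc: "U \<in> carrier_mat n n" using U by (simp add: unitary_def)
  show ?thesis
  proof (rule psd_sqrt_eq)
    show "psd n (sp n U d)" using psd_sp[OF Uc] d by blast
    show "psd n (sp n U (\<lambda>k. sqrt (d k)))" using psd_sp[OF Uc, of "\<lambda>k. sqrt (d k)"] d by simp
    show "sp n U (\<lambda>k. sqrt (d k)) * sp n U (\<lambda>k. sqrt (d k)) = sp n U d"
      unfolding sp_mult[OF U] using d by (intro sp_cong) simp
  qed
qed

lemma psd_spec:
  assumes M: "psd n M"
  obtains U d where "unitary n U" "\<And>k. k < n \<Longrightarrow> d k \<ge> 0" "M = sp n U d"
    "psd_sqrt M = sp n U (\<lambda>k. sqrt (d k))"
proof -
  obtain U d where U: "unitary n U" and Md: "M = sp n U d" using spectral[OF psd_herm[OF M]] by blast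
  have d: "d k \<ge> 0" if "k < n" for k using psd_sp_nonneg[OF U M[unfolded Md] that] .
  show ?thesis using that[OF U d Md] psd_sqrt_sp[OF U d] Md by simp
qed

lemma psd_sqrt_psd: "psd n M \<Longrightarrow> psd n (psd_sqrt M)"
proof -
  assume M: "psd n M"
  obtain U d where U: "unitary n U" and d: "\<And>k. k < n \<Longrightarrow> d k \<ge> 0" and Md: "M = sp n U d"
    and S: "psd_sqrt M = sp n U (\<lambda>k. sqrt (d k))" using psd_spec[OF M] by blast
  have Uc: "U \<in> carrier_mat n n" using U by (simp add: unitary_def)
  show ?thesis unfolding S by (rule psd_sp[OF Uc]) (use d in simp)
qed

lemma psd_sqrt_sq: "psd n M \<Longrightarrow> psd_sqrt M * psd_sqrt M = M"
proof -
  assume M: "psd n M"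
  obtain U d where U: "unitary n U" and d: "\<And>k. k < n \<Longrightarrow> d k \<ge> 0" and Md: "M = sp n U d"
    and S: "psd_sqrt M = sp n U (\<lambda>k. sqrt (d k))" using psd_spec[OF M] by blast
  have "sp n U (\<lambda>k. sqrt (d k)) * sp n U (\<lambda>k. sqrt (d k)) = sp n U d"
    unfolding sp_mult[OF U] using d by (intro sp_cong) simp
  then show ?thesis using S Md by simp
qed

lemma psd_sqrt_carrier: "psd n M \<Longrightarrow> psd_sqrt M \<in> carrier_mat n n"
  using psd_sqrt_psd psd_carrier by blast

lemma psd_smult: "psd n M \<Longrightarrow> c \<ge> 0 \<Longrightarrow> psd n (complex_of_real c \<cdot>\<^sub>m M)"
proof -
  assume M: "psd n M" and c: "c \<ge> 0"
  obtain U d where U: "unitary n U" and d: "\<And>k. k < n \<Longrightarrow> d k \<ge> 0" and Md: "M = sp n U d"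
    using psd_spec[OF M] by blast
  have Uc: "U \<in> carrier_mat n n" using U by (simp add: unitary_def)
  show ?thesis unfolding Md sp_smult by (rule psd_sp[OF Uc]) (use c d in simp)
qed

lemma psd_sqrt_smult:
  assumes M: "psd n M" and c: "c \<ge> 0"
  shows "psd_sqrt (complex_of_real c \<cdot>\<^sub>m M) = complex_of_real (sqrt c) \<cdot>\<^sub>m psd_sqrt M"
proof -
  obtain U d where U: "unitary n U" and d: "\<And>k. k < n \<Longrightarrow> d k \<ge> 0" and Md: "M = sp n U d"
    and S: "psd_sqrt M = sp n U (\<lambda>k. sqrt (d k))" using psd_spec[OF M] by blast
  have "psd_sqrt (complex_of_real c \<cdot>\<^sub>m M) = psd_sqrt (sp n U (\<lambda>k. c * d k))" unfolding Md sp_smult ..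
  also have "\<dots> = sp n U (\<lambda>k. sqrt (c * d k))" using d c by (intro psd_sqrt_sp[OF U]) simp
  also have "\<dots> = complex_of_real (sqrt c) \<cdot>\<^sub>m psd_sqrt M" unfolding S sp_smult by (simp add: real_sqrt_mult)
  finally show ?thesis .
qed



lemma re_cnj_mult_le:
  assumes t: "t > 0"
  shows "2 * Re (cnj a * b) \<le> t * (cmod a)\<^sup>2 + (cmod b)\<^sup>2 / t"
proof -
  have h: "0 \<le> (t * Re a - Re b)\<^sup>2 + (t * Im a - Im b)\<^sup>2" by simp
  have e: "t * (t * (cmod a)\<^sup>2 + (cmod b)\<^sup>2 / t) - t * (2 * Re (cnj a * b)) = (t * Re a - Re b)\<^sup>2 + (t * Im a - Im b)\<^sup>2"
    unfolding cmod_power2 using t by (simp add: field_simps power2_eq_square)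
  have "t * (2 * Re (cnj a * b)) \<le> t * (t * (cmod a)\<^sup>2 + (cmod b)\<^sup>2 / t)" using h e by linarith
  then show ?thesis using t by simp
qed

lemma re_ip_self: "Re (ip v v) = (\<Sum>i<dim_vec v. (cmod (v $ i))\<^sup>2)"
  by (subst ip_self_real) simp

lemma re_ip_le:
  assumes t: "t > 0" and d: "dim_vec w = dim_vec u"
  shows "2 * Re (ip u w) \<le> t * Re (ip u u) + Re (ip w w) / t"
proof -
  have "2 * Re (ip u w) = (\<Sum>i<dim_vec u. 2 * Re (cnj (u $ i) * w $ i))"
    by (simp add: ip_def sum_distrib_left)
  also have "\<dots> \<le> (\<Sum>i<dim_vec u. t * (cmod (u $ i))\<^sup>2 + (cmod (w $ i))\<^sup>2 / t)"
    by (intro sum_mono re_cnj_mult_le t)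
  also have "\<dots> = t * Re (ip u u) + Re (ip w w) / t"
    unfolding re_ip_self using d by (simp add: sum.distrib sum_distrib_left sum_divide_distrib)
  finally show ?thesis .
qed

lemma cs_lite:
  assumes uu: "ip u u = 1" and d: "dim_vec w = dim_vec u"
  shows "Re (ip u w) \<le> sqrt (Re (ip w w))"
proof -
  define s where "s = Re (ip w w)"
  have s0: "s \<ge> 0" unfolding s_def re_ip_self by (intro sum_nonneg) simp
  have key: "2 * Re (ip u w) \<le> t + s / t" if "t > 0" for t
    using re_ip_le[OF that d] uu by (simp add: s_def)
  show ?thesis
  proof (cases "s > 0")
    case True
    have "2 * Re (ip u w) \<le> sqrt s + s / sqrt s" using key[of "sqrt s"] True by simp
    also have "s / sqrt s = sqrt s" using True by (simp add: real_div_sqrt)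
    finally show ?thesis by (simp add: s_def)
  next
    case False
    then have s: "s = 0" using s0 by simp
    show ?thesis
    proof (rule ccontr)
      assume "\<not> ?thesis"
      then have r: "Re (ip u w) > 0" using s by (simp add: s_def)
      have "2 * Re (ip u w) \<le> Re (ip u w)" using key[OF r] s by simp
      then show False using r by simp
    qed
  qed
qed

lemma trace_comm:
  assumes A: "A \<in> carrier_mat n n" and B: "B \<in> carrier_mat n n"
  shows "trace (A * B) = trace (B * A)"
proof -
  have "trace (A * B) = (\<Sum>i<n. \<Sum>k<n. A $$ (i,k) * B $$ (k,i))" using A B by (simp add: trace_def)
  also have "\<dots> = (\<Sum>k<n. \<Sum>i<n. A $$ (i,k) * B $$ (k,i))" by (rule sum.swap)
  also have "\<dots> = trace (B * A)" using A B by (simp add: trace_def mult.commute)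
  finally show ?thesis .
qed

lemma trace_basis:
  assumes U: "unitary n U" and A: "A \<in> carrier_mat n n"
  shows "trace A = (\<Sum>k<n. ip (col U k) (A *\<^sub>v col U k))"
proof -
  have Uc: "U \<in> carrier_mat n n" using U by (simp add: unitary_def)
  have "trace A = trace (A * sp n U (\<lambda>_. 1))" using A by (simp add: sp_one[OF U])
  also have "\<dots> = (\<Sum>k<n. ip (col U k) (A *\<^sub>v col U k))"
    by (simp add: trace_mult_sp[OF A Uc])
  finally show ?thesis .
qed

lemma psd_cadj_mult:
  assumes X: "X \<in> carrier_mat n n"
  shows "psd n (cadj X * X)"
  unfolding psd_def'
proof (intro conjI ballI)
  show "hermitian n (cadj X * X)" using X by (simp add: hermitian_def cadj_mult[of _ n n _ n])
  fix v :: "complex vec" assume v: "v \<in> carrier_vec n"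
  have "ip v ((cadj X * X) *\<^sub>v v) = ip (X *\<^sub>v v) (X *\<^sub>v v)"
    using X v ip_adj[of "cadj X" n v "X *\<^sub>v v"] assoc_mult_mat_vec[of "cadj X" n n X n v] by simp
  then show "0 \<le> Re (ip v ((cadj X * X) *\<^sub>v v))" by (simp add: re_ip_self sum_nonneg)
qed

lemma ip_unit_col: "unitary n U \<Longrightarrow> k < n \<Longrightarrow> ip (col U k) (col U k) = 1"
  using col_ip_unitary by simp

lemma re_trace_le_norm:
  assumes X: "X \<in> carrier_mat n n"
  shows "Re (trace X) \<le> trace_norm X"
proof -
  have M: "psd n (cadj X * X)" by (rule psd_cadj_mult[OF X])
  obtain U d where U: "unitary n U" and d: "\<And>k. k < n \<Longrightarrow> d k \<ge> 0" and Md: "cadj X * X = sp n U d"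
    and S: "psd_sqrt (cadj X * X) = sp n U (\<lambda>k. sqrt (d k))" using psd_spec[OF M] by blast
  have Uc: "U \<in> carrier_mat n n" using U by (simp add: unitary_def)
  have "Re (trace X) = (\<Sum>k<n. Re (ip (col U k) (X *\<^sub>v col U k)))"
    by (simp add: trace_basis[OF U X])
  also have "\<dots> \<le> (\<Sum>k<n. sqrt (d k))"
  proof (rule sum_mono)
    fix k assume k: "k \<in> {..<n}"
    have "Re (ip (col U k) (X *\<^sub>v col U k)) \<le> sqrt (Re (ip (X *\<^sub>v col U k) (X *\<^sub>v col U k)))"
      using X Uc k by (intro cs_lite ip_unit_col[OF U]) auto
    also have "ip (X *\<^sub>v col U k) (X *\<^sub>v col U k) = ip (col U k) ((cadj X * X) *\<^sub>v col U k)"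
      using X Uc k ip_adj[of "cadj X" n "col U k" "X *\<^sub>v col U k"] assoc_mult_mat_vec[of "cadj X" n n X n "col U k"] by simp
    also have "\<dots> = complex_of_real (d k)" unfolding Md using sp_qf_col[OF U] k by simp
    finally show "Re (ip (col U k) (X *\<^sub>v col U k)) \<le> sqrt (d k)" by simp
  qed
  also have "\<dots> = trace_norm X" unfolding trace_norm_def S trace_sp[OF U] by simp
  finally show ?thesis .
qed



lemma amgm_div:
  assumes c: "c > 0" and m: "m \<ge> 0"
  shows "2 * sqrt m \<le> m / c + c"
proof -
  have "0 \<le> (sqrt m - c)\<^sup>2" by simp
  then have "2 * sqrt m * c \<le> m + c * c" using m by (simp add: power2_eq_square algebra_simps)
  then have "2 * sqrt m * c / c \<le> (m + c * c) / c" using c by (intro divide_right_mono) auto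
  then show ?thesis using c by (simp add: field_simps)
qed

lemma herm_cadj: "hermitian n A \<Longrightarrow> cadj A = A" by (simp add: hermitian_def)

lemma trace_norm_le_half:
  assumes P: "psd n P" and W: "unitary n W" and c: "\<And>k. k < n \<Longrightarrow> c k > 0"
  shows "trace_norm (P * sp n W (\<lambda>k. sqrt (c k))) \<le> (Re (trace (P * P)) + (\<Sum>k<n. c k)) / 2"
proof -
  define Q where "Q = sp n W (\<lambda>k. sqrt (c k))"
  define Ki where "Ki = sp n W (\<lambda>k. 1 / c k)"
  have Pc: "P \<in> carrier_mat n n" using P by (rule psd_carrier)
  have Qc: "Q \<in> carrier_mat n n" and Kic: "Ki \<in> carrier_mat n n" by (auto simp: Q_def Ki_def)
  have Wc: "W \<in> carrier_mat n n" using W by (simp add: unitary_def)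
  define X where "X = P * Q"
  have Xc: "X \<in> carrier_mat n n" using Pc Qc by (simp add: X_def)
  define M where "M = cadj X * X"
  have Mc: "M \<in> carrier_mat n n" using Xc by (simp add: M_def)
  have Mpsd: "psd n M" unfolding M_def by (rule psd_cadj_mult[OF Xc])
  define S where "S = psd_sqrt M"
  have Spsd: "psd n S" unfolding S_def by (rule psd_sqrt_psd[OF Mpsd])
  have Sc: "S \<in> carrier_mat n n" using Spsd by (rule psd_carrier)
  have SS: "S * S = M" unfolding S_def by (rule psd_sqrt_sq[OF Mpsd])
  have mj: "Re (ip (col W j) (S *\<^sub>v col W j)) \<le> sqrt (Re (ip (col W j) (M *\<^sub>v col W j)))" if j: "j < n" for j
  proof -
    have "Re (ip (col W j) (S *\<^sub>v col W j)) \<le> sqrt (Re (ip (S *\<^sub>v col W j) (S *\<^sub>v col W j)))"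
      using Sc Wc j by (intro cs_lite ip_unit_col[OF W]) auto
    also have "ip (S *\<^sub>v col W j) (S *\<^sub>v col W j) = ip (col W j) (M *\<^sub>v col W j)"
      using ip_herm[OF psd_herm[OF Spsd], of "col W j" "S *\<^sub>v col W j"] Sc Wc j
        assoc_mult_mat_vec[of S n n S n "col W j"] SS by simp
    finally show ?thesis .
  qed
  have mnn: "Re (ip (col W j) (M *\<^sub>v col W j)) \<ge> 0" if j: "j < n" for j
    using psd_qf[OF Mpsd] Wc j by simp
  have "trace_norm X = Re (trace S)" by (simp add: trace_norm_def S_def M_def)
  also have "\<dots> = (\<Sum>j<n. Re (ip (col W j) (S *\<^sub>v col W j)))" by (simp add: trace_basis[OF W Sc])
  also have "\<dots> \<le> (\<Sum>j<n. (Re (ip (col W j) (M *\<^sub>v col W j)) / c j + c j) / 2)"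
  proof (rule sum_mono)
    fix j assume "j \<in> {..<n}"
    then have j: "j < n" by simp
    show "Re (ip (col W j) (S *\<^sub>v col W j)) \<le> (Re (ip (col W j) (M *\<^sub>v col W j)) / c j + c j) / 2"
      using mj[OF j] amgm_div[OF c[OF j] mnn[OF j]] by simp
  qed
  also have "\<dots> = (Re (trace (M * Ki)) + (\<Sum>j<n. c j)) / 2"
  proof -
    have "Re (trace (M * Ki)) = (\<Sum>j<n. Re (ip (col W j) (M *\<^sub>v col W j)) / c j)"
      unfolding Ki_def trace_mult_sp[OF Mc Wc] by simp
    then show ?thesis by (simp add: sum_divide_distrib[symmetric] sum.distrib)
  qed
  also have "trace (M * Ki) = trace (P * P)"
  proof -
    have hQ: "cadj Q = Q" unfolding Q_def by (rule herm_cadj[OF sp_hermitian])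
    have hP: "cadj P = P" by (rule herm_cadj[OF psd_herm[OF P]])
    have QKQ: "Q * Ki * Q = 1\<^sub>m n"
    proof -
      have "Q * Ki * Q = sp n W (\<lambda>k. sqrt (c k) * (1 / c k) * sqrt (c k))"
        unfolding Q_def Ki_def sp_mult[OF W] ..
      also have "\<dots> = sp n W (\<lambda>_. 1)"
      proof (rule sp_cong)
        fix k assume k: "k < n"
        have ck: "c k > 0" using c[OF k] .
        have "sqrt (c k) * (1 / c k) * sqrt (c k) = (sqrt (c k) * sqrt (c k)) / c k" by simp
        also have "sqrt (c k) * sqrt (c k) = c k" using ck by simp
        finally show "sqrt (c k) * (1 / c k) * sqrt (c k) = 1" using ck by simp
      qed
      finally show ?thesis using sp_one[OF W] by simp
    qed
    have "M = Q * (P * P * Q)"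
      unfolding M_def X_def using Pc Qc by (simp add: cadj_mult[of P n n Q n] hP hQ assoc_sq[of _ n])
    then have "trace (M * Ki) = trace (Q * (P * P * Q * Ki))"
      using Pc Qc Kic by (simp add: assoc_sq[of _ n])
    also have "\<dots> = trace (P * P * Q * Ki * Q)"
      using Pc Qc Kic by (subst trace_comm[of _ n]) (auto simp: assoc_sq[of _ n])
    also have "\<dots> = trace (P * P * (Q * Ki * Q))"
      using Pc Qc Kic by (simp add: assoc_sq[of _ n])
    also have "\<dots> = trace (P * P)" using QKQ Pc by simp
    finally show ?thesis .
  qed
  finally show ?thesis by (simp add: X_def Q_def)
qed



definition msum :: "nat \<Rightarrow> ('a \<Rightarrow> complex mat) \<Rightarrow> 'a set \<Rightarrow> complex mat" where
  "msum n f S = mat n n (\<lambda>(i,j). \<Sum>s\<in>S. f s $$ (i,j))"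

lemma msum_carrier[simp]: "msum n f S \<in> carrier_mat n n" and msum_dims[simp]: "dim_row (msum n f S) = n" "dim_col (msum n f S) = n"
  by (auto simp: msum_def)

lemma msum_idx[simp]: "i < n \<Longrightarrow> j < n \<Longrightarrow> msum n f S $$ (i,j) = (\<Sum>s\<in>S. f s $$ (i,j))"
  by (simp add: msum_def)

lemma msum_insert:
  assumes "finite S" "x \<notin> S" "f x \<in> carrier_mat n n"
  shows "msum n f (insert x S) = f x + msum n f S"
  by (rule eq_matI) (use assms in auto)

lemma msum_empty: "msum n f {} = 0\<^sub>m n n"
  by (rule eq_matI) auto

lemma lin_zero:
  assumes L: "linear_op_map n \<Phi>"
  shows "\<Phi> (0\<^sub>m n n) = 0\<^sub>m n n"
proof -
  have c: "\<Phi> (0\<^sub>m n n) \<in> carrier_mat n n" using L by (simp add: linear_op_map_def)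
  have z: "0 \<cdot>\<^sub>m 0\<^sub>m n n = (0\<^sub>m n n :: complex mat)" by (intro eq_matI) auto
  have "\<Phi> (0 \<cdot>\<^sub>m 0\<^sub>m n n) = 0 \<cdot>\<^sub>m \<Phi> (0\<^sub>m n n)" using L zero_carrier_mat unfolding linear_op_map_def by blast
  then have "\<Phi> (0\<^sub>m n n) = 0 \<cdot>\<^sub>m \<Phi> (0\<^sub>m n n)" unfolding z .
  also have "\<dots> = 0\<^sub>m n n" using c by (intro eq_matI) auto
  finally show ?thesis .
qed

lemma lin_msum:
  assumes L: "linear_op_map n \<Phi>" and S: "finite S" and f: "\<And>s. s \<in> S \<Longrightarrow> f s \<in> carrier_mat n n"
  shows "\<Phi> (msum n f S) = msum n (\<lambda>s. \<Phi> (f s)) S"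
  using S f
proof (induction S rule: finite_induct)
  case empty
  then show ?case using lin_zero[OF L] by (simp add: msum_empty)
next
  case (insert x S)
  have fx: "f x \<in> carrier_mat n n" using insert by simp
  have Pfx: "\<Phi> (f x) \<in> carrier_mat n n" using L fx by (simp add: linear_op_map_def)
  have "\<Phi> (msum n f (insert x S)) = \<Phi> (f x + msum n f S)" using insert fx by (simp add: msum_insert)
  also have "\<dots> = \<Phi> (f x) + \<Phi> (msum n f S)" using L fx by (simp add: linear_op_map_def)
  also have "\<dots> = msum n (\<lambda>s. \<Phi> (f s)) (insert x S)" using insert Pfx by (simp add: msum_insert)
  finally show ?case .
qed

lemma lin_smult: "linear_op_map n \<Phi> \<Longrightarrow> X \<in> carrier_mat n n \<Longrightarrow> \<Phi> (c \<cdot>\<^sub>m X) = c \<cdot>\<^sub>m \<Phi> X"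
  by (simp add: linear_op_map_def)

lemma lin_carrier: "linear_op_map n \<Phi> \<Longrightarrow> X \<in> carrier_mat n n \<Longrightarrow> \<Phi> X \<in> carrier_mat n n"
  by (simp add: linear_op_map_def)

lemma trace_unit:
  assumes M: "M \<in> carrier_mat n n" and a: "a < n" and b: "b < n"
  shows "trace (mat n n (\<lambda>(i,j). if i = b \<and> j = a then 1 else 0) * M) = M $$ (a,b)"
proof -
  have "trace (mat n n (\<lambda>(i,j). if i = b \<and> j = a then 1 else 0) * M) = (\<Sum>i<n. \<Sum>k<n. (if i = b \<and> k = a then 1 else 0) * M $$ (k,i))"
    using M by (simp add: trace_def)
  also have "\<dots> = (\<Sum>i<n. if i = b then M $$ (a,i) else 0)"
  proof (rule sum.cong[OF refl])
    fix i assume "i \<in> {..<n}"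
    have e: "\<And>P x. (if P then 1 else 0) * x = (if P then x else (0::complex))" by simp
    show "(\<Sum>k<n. (if i = b \<and> k = a then 1 else 0) * M $$ (k,i)) = (if i = b then M $$ (a,i) else 0)"
      using a by (cases "i = b") (simp_all only: e, simp_all)
  qed
  also have "\<dots> = M $$ (a,b)" using b by simp
  finally show ?thesis .
qed

lemma nondeg:
  assumes M: "M \<in> carrier_mat n n" and N: "N \<in> carrier_mat n n"
    and h: "\<And>X. X \<in> carrier_mat n n \<Longrightarrow> trace (X * M) = trace (X * N)"
  shows "M = N"
proof (rule eq_matI)
  fix a b assume "a < dim_row N" "b < dim_col N"
  then have a: "a < n" and b: "b < n" using N by auto
  show "M $$ (a,b) = N $$ (a,b)"
    using h[of "mat n n (\<lambda>(i,j). if i = b \<and> j = a then 1 else 0)"] trace_unit[OF M a b] trace_unit[OF N a b] by simp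
qed (use M N in auto)

lemma trace_add: "A \<in> carrier_mat n n \<Longrightarrow> B \<in> carrier_mat n n \<Longrightarrow> trace (A + B) = trace A + trace B"
  by (simp add: trace_def sum.distrib)

lemma trace_smult: "A \<in> carrier_mat n n \<Longrightarrow> trace (c \<cdot>\<^sub>m A) = c * trace A"
  unfolding trace_def by (auto simp: sum_distrib_left intro!: sum.cong)

lemma trace_mult_add: "A \<in> carrier_mat n n \<Longrightarrow> B \<in> carrier_mat n n \<Longrightarrow> C \<in> carrier_mat n n \<Longrightarrow> trace (A * (B + C)) = trace (A * B) + trace (A * C)"
  by (simp add: mult_add_distrib_mat[of _ n n] trace_add[of _ n])

lemma trace_mult_smult: "A \<in> carrier_mat n n \<Longrightarrow> B \<in> carrier_mat n n \<Longrightarrow> trace (A * (c \<cdot>\<^sub>m B)) = c * trace (A * B)"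
  by (simp add: mult_smult_distrib[of _ n n] trace_smult[of _ n])

lemma dual_linear:
  assumes L: "linear_op_map n \<Phi>" and D: "is_trace_dual n \<Phi> \<Phi>'"
  shows "linear_op_map n \<Phi>'"
proof -
  have c: "\<And>Y. Y \<in> carrier_mat n n \<Longrightarrow> \<Phi>' Y \<in> carrier_mat n n" and tr: "\<And>X Y. X \<in> carrier_mat n n \<Longrightarrow> Y \<in> carrier_mat n n \<Longrightarrow> trace (\<Phi> X * Y) = trace (X * \<Phi>' Y)"
    using D by (auto simp: is_trace_dual_def)
  have add: "\<Phi>' (Y1 + Y2) = \<Phi>' Y1 + \<Phi>' Y2" if Y1: "Y1 \<in> carrier_mat n n" and Y2: "Y2 \<in> carrier_mat n n" for Y1 Y2
  proof (rule nondeg)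
    show "\<Phi>' (Y1 + Y2) \<in> carrier_mat n n" using c Y1 Y2 by simp
    show "\<Phi>' Y1 + \<Phi>' Y2 \<in> carrier_mat n n" using c Y1 Y2 by simp
    fix X :: "complex mat" assume X: "X \<in> carrier_mat n n"
    have PX: "\<Phi> X \<in> carrier_mat n n" using lin_carrier[OF L X] .
    have "trace (X * \<Phi>' (Y1 + Y2)) = trace (\<Phi> X * (Y1 + Y2))" using tr X Y1 Y2 by simp
    also have "\<dots> = trace (\<Phi> X * Y1) + trace (\<Phi> X * Y2)" using PX Y1 Y2 by (rule trace_mult_add)
    also have "\<dots> = trace (X * \<Phi>' Y1) + trace (X * \<Phi>' Y2)" using tr X Y1 Y2 by simp
    also have "\<dots> = trace (X * (\<Phi>' Y1 + \<Phi>' Y2))" using X c Y1 Y2 by (simp add: trace_mult_add)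
    finally show "trace (X * \<Phi>' (Y1 + Y2)) = trace (X * (\<Phi>' Y1 + \<Phi>' Y2))" .
  qed
  have sm: "\<Phi>' (a \<cdot>\<^sub>m Y) = a \<cdot>\<^sub>m \<Phi>' Y" if Y: "Y \<in> carrier_mat n n" for Y a
  proof (rule nondeg)
    show "\<Phi>' (a \<cdot>\<^sub>m Y) \<in> carrier_mat n n" using c Y by simp
    show "a \<cdot>\<^sub>m \<Phi>' Y \<in> carrier_mat n n" using c Y by simp
    fix X :: "complex mat" assume X: "X \<in> carrier_mat n n"
    have PX: "\<Phi> X \<in> carrier_mat n n" using lin_carrier[OF L X] .
    have "trace (X * \<Phi>' (a \<cdot>\<^sub>m Y)) = trace (\<Phi> X * (a \<cdot>\<^sub>m Y))" using tr X Y by simp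
    also have "\<dots> = a * trace (\<Phi> X * Y)" using PX Y by (rule trace_mult_smult)
    also have "\<dots> = a * trace (X * \<Phi>' Y)" using tr X Y by simp
    also have "\<dots> = trace (X * (a \<cdot>\<^sub>m \<Phi>' Y))" using X c Y by (simp add: trace_mult_smult)
    finally show "trace (X * \<Phi>' (a \<cdot>\<^sub>m Y)) = trace (X * (a \<cdot>\<^sub>m \<Phi>' Y))" .
  qed
  show ?thesis unfolding linear_op_map_def using c add sm by blast
qed

lemma dual_one:
  assumes L: "linear_op_map n \<Phi>" and T: "trace_preserving n \<Phi>" and D: "is_trace_dual n \<Phi> \<Phi>'"
  shows "\<Phi>' (1\<^sub>m n) = 1\<^sub>m n"
proof (rule nondeg)
  show "\<Phi>' (1\<^sub>m n) \<in> carrier_mat n n" using D by (simp add: is_trace_dual_def)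
  show "1\<^sub>m n \<in> carrier_mat n n" by simp
  fix X :: "complex mat" assume X: "X \<in> carrier_mat n n"
  have "trace (X * \<Phi>' (1\<^sub>m n)) = trace (\<Phi> X * 1\<^sub>m n)" using D X by (simp add: is_trace_dual_def)
  also have "\<dots> = trace (\<Phi> X)" using lin_carrier[OF L X] by simp
  also have "\<dots> = trace X" using T X by (simp add: trace_preserving_def)
  finally show "trace (X * \<Phi>' (1\<^sub>m n)) = trace (X * 1\<^sub>m n)" using X by simp
qed

lemma cp_positive:
  assumes L: "linear_op_map n \<Phi>" and C: "completely_positive n \<Phi>" and X: "psd n X"
  shows "psd n (\<Phi> X)"
proof -
  have Xc: "X \<in> carrier_mat n n" using X by (rule psd_carrier)
  have PX: "\<Phi> X \<in> carrier_mat n n" using lin_carrier[OF L Xc] .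
  have e: "id_tensor 1 n \<Phi> X = \<Phi> X"
  proof -
    have inner: "mat n n (($$) X) = X"
      using Xc by (intro eq_matI) auto
    show ?thesis unfolding id_tensor_def using PX by (intro eq_matI) (auto simp: inner)
  qed
  have "psd (1 * n) (id_tensor 1 n \<Phi> X)" using C X unfolding completely_positive_def
    by (metis mult_1)
  then show ?thesis using e by simp
qed



lemma qf_add:
  assumes M: "M \<in> carrier_mat n n" and x: "x \<in> carrier_vec n" and y: "y \<in> carrier_vec n"
  shows "ip (x + y) (M *\<^sub>v (x + y)) = ip x (M *\<^sub>v x) + ip x (M *\<^sub>v y) + ip y (M *\<^sub>v x) + ip y (M *\<^sub>v y)"
proof -
  have dx: "dim_vec x = n" and dy: "dim_vec y = n" and dMx: "dim_vec (M *\<^sub>v x) = n" and dMy: "dim_vec (M *\<^sub>v y) = n"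
    using M x y by auto
  have "M *\<^sub>v (x + y) = M *\<^sub>v x + M *\<^sub>v y" using M x y by (rule mult_add_distrib_mat_vec)
  then show ?thesis using dx dy dMx dMy by (simp add: ip_add_left ip_add_right)
qed

lemma if10_mult: "(if P then 1 else 0) * (x::complex) = (if P then x else 0)"
  "x * (if P then 1 else 0) = (if P then x else 0)" "cnj (if P then 1 else 0) = (if P then 1 else 0)" by auto

lemma unit_ip: "a < n \<Longrightarrow> b < n \<Longrightarrow> M \<in> carrier_mat n n \<Longrightarrow> ip (unit_vec n a) (M *\<^sub>v unit_vec n b) = M $$ (a,b)"
proof -
  assume a: "a < n" and b: "b < n" and M: "M \<in> carrier_mat n n"
  have "ip (unit_vec n a) (M *\<^sub>v unit_vec n b) = (\<Sum>i<n. if i = a then M $$ (i, b) else 0)"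
    using a b M by (auto simp: ip_def if10_mult sum.delta intro!: sum.cong)
  then show ?thesis using a by simp
qed

lemma real_qf_hermitian:
  assumes M: "M \<in> carrier_mat n n" and r: "\<And>x. x \<in> carrier_vec n \<Longrightarrow> Im (ip x (M *\<^sub>v x)) = 0"
  shows "hermitian n M"
proof (rule hermitianI[OF M])
  fix a b assume a: "a < n" and b: "b < n"
  let ?ea = "unit_vec n a :: complex vec" and ?eb = "unit_vec n b :: complex vec"
  have ea: "?ea \<in> carrier_vec n" and eb: "?eb \<in> carrier_vec n" and ieb: "\<i> \<cdot>\<^sub>v ?eb \<in> carrier_vec n" by auto
  have P: "ip ?ea (M *\<^sub>v ?eb) = M $$ (a,b)" and R: "ip ?eb (M *\<^sub>v ?ea) = M $$ (b,a)"
    using a b M by (auto intro: unit_ip)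
  have "Im (ip (?ea + ?eb) (M *\<^sub>v (?ea + ?eb))) = 0" using r ea eb by simp
  then have s1: "Im (M $$ (a,b) + M $$ (b,a)) = 0"
    unfolding qf_add[OF M ea eb] P R using r[OF ea] r[OF eb] by simp
  have e1: "ip ?ea (M *\<^sub>v (\<i> \<cdot>\<^sub>v ?eb)) = \<i> * M $$ (a,b)"
    using M ip_smult_right[of "M *\<^sub>v ?eb" ?ea \<i>] P by (simp add: mult_mat_vec)
  have e2: "ip (\<i> \<cdot>\<^sub>v ?eb) (M *\<^sub>v ?ea) = - \<i> * M $$ (b,a)"
    using ip_smult_left[of \<i> ?eb "M *\<^sub>v ?ea"] R by simp
  have "Im (ip (?ea + \<i> \<cdot>\<^sub>v ?eb) (M *\<^sub>v (?ea + \<i> \<cdot>\<^sub>v ?eb))) = 0" using r ea ieb by simp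
  then have s2: "Im (\<i> * M $$ (a,b) - \<i> * M $$ (b,a)) = 0"
    unfolding qf_add[OF M ea ieb] e1 e2 using r[OF ea] r[OF ieb] by simp
  from s1 s2 show "M $$ (a,b) = cnj (M $$ (b,a))" by (simp add: complex_eq_iff)
qed

definition outer :: "nat \<Rightarrow> complex vec \<Rightarrow> complex mat" where
  "outer n x = mat n n (\<lambda>(a,b). x $ a * cnj (x $ b))"

lemma outer_carrier[simp]: "outer n x \<in> carrier_mat n n" by (simp add: outer_def)

lemma trace_outer:
  assumes M: "M \<in> carrier_mat n n" and x: "x \<in> carrier_vec n"
  shows "trace (M * outer n x) = ip x (M *\<^sub>v x)"
proof -
  have "trace (M * outer n x) = (\<Sum>a<n. \<Sum>b<n. M $$ (a,b) * (x $ b * cnj (x $ a)))"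
    using M by (simp add: trace_def outer_def)
  also have "\<dots> = ip x (M *\<^sub>v x)" using M x by (simp add: ip_def sum_distrib_left algebra_simps)
  finally show ?thesis .
qed

lemma psd_outer:
  assumes x: "x \<in> carrier_vec n"
  shows "psd n (outer n x)"
  unfolding psd_def'
proof (intro conjI ballI)
  show "hermitian n (outer n x)" by (rule hermitianI) (auto simp: outer_def)
  fix v :: "complex vec" assume v: "v \<in> carrier_vec n"
  have "ip v (outer n x *\<^sub>v v) = cnj (ip x v) * ip x v"
    using x v by (simp add: outer_def ip_def sum_distrib_left sum_distrib_right algebra_simps)
  then show "0 \<le> Re (ip v (outer n x *\<^sub>v v))" by (simp add: cnj_mult_self)
qed

lemma trace_psd_psd:
  assumes P: "psd n P" and Y: "psd n Y"
  shows "Im (trace (P * Y)) = 0 \<and> Re (trace (P * Y)) \<ge> 0"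
proof -
  obtain V y where V: "unitary n V" and y: "\<And>k. k < n \<Longrightarrow> y k \<ge> 0" and Yd: "Y = sp n V y"
    using psd_spec[OF Y] by blast
  have Vc: "V \<in> carrier_mat n n" using V by (simp add: unitary_def)
  have Pc: "P \<in> carrier_mat n n" using P by (rule psd_carrier)
  have t: "trace (P * Y) = (\<Sum>k<n. complex_of_real (y k) * ip (col V k) (P *\<^sub>v col V k))"
    unfolding Yd by (rule trace_mult_sp[OF Pc Vc])
  have "ip (col V k) (P *\<^sub>v col V k) = complex_of_real (Re (ip (col V k) (P *\<^sub>v col V k)))" if "k < n" for k
    using herm_qf_ofreal[OF psd_herm[OF P], of "col V k"] Vc that by simp
  then have "trace (P * Y) = complex_of_real (\<Sum>k<n. y k * Re (ip (col V k) (P *\<^sub>v col V k)))"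
    unfolding t of_real_sum by (intro sum.cong) auto
  moreover have "(\<Sum>k<n. y k * Re (ip (col V k) (P *\<^sub>v col V k))) \<ge> 0"
    using y psd_qf[OF P] Vc by (intro sum_nonneg mult_nonneg_nonneg) auto
  ultimately show ?thesis by simp
qed

lemma dual_positive:
  assumes L: "linear_op_map n \<Phi>" and C: "completely_positive n \<Phi>" and D: "is_trace_dual n \<Phi> \<Phi>'"
    and Y: "psd n Y"
  shows "psd n (\<Phi>' Y)"
proof -
  have Yc: "Y \<in> carrier_mat n n" using Y by (rule psd_carrier)
  have Qc: "\<Phi>' Y \<in> carrier_mat n n" using D Yc by (simp add: is_trace_dual_def)
  have key: "Im (ip x (\<Phi>' Y *\<^sub>v x)) = 0 \<and> Re (ip x (\<Phi>' Y *\<^sub>v x)) \<ge> 0" if x: "x \<in> carrier_vec n" for x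
  proof -
    have "ip x (\<Phi>' Y *\<^sub>v x) = trace (\<Phi>' Y * outer n x)" using trace_outer[OF Qc x] by simp
    also have "\<dots> = trace (outer n x * \<Phi>' Y)" using Qc by (intro trace_comm) auto
    also have "\<dots> = trace (\<Phi> (outer n x) * Y)" using D Yc by (simp add: is_trace_dual_def)
    finally have e: "ip x (\<Phi>' Y *\<^sub>v x) = trace (\<Phi> (outer n x) * Y)" .
    have "psd n (\<Phi> (outer n x))" using cp_positive[OF L C psd_outer[OF x]] .
    then show ?thesis using trace_psd_psd[OF _ Y] e by simp
  qed
  have "hermitian n (\<Phi>' Y)" using key by (intro real_qf_hermitian[OF Qc]) auto
  then show ?thesis unfolding psd_def' using key by auto
qed



definition delta :: "nat \<Rightarrow> nat \<Rightarrow> real" where "delta j k = (if k = j then 1 else 0)"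

lemma ofr_if: "complex_of_real (if P then 1 else 0) = (if P then 1 else 0)"
  "(if P then x else 0) * (y::complex) = (if P then x * y else 0)" by auto

lemma sp_decomp:
  "sp n V d = msum n (\<lambda>j. complex_of_real (d j) \<cdot>\<^sub>m sp n V (delta j)) {..<n}"
proof (rule eq_matI)
  fix a b assume "a < dim_row (msum n (\<lambda>j. complex_of_real (d j) \<cdot>\<^sub>m sp n V (delta j)) {..<n})"
    "b < dim_col (msum n (\<lambda>j. complex_of_real (d j) \<cdot>\<^sub>m sp n V (delta j)) {..<n})"
  then have a: "a < n" and b: "b < n" by auto
  have "msum n (\<lambda>j. complex_of_real (d j) \<cdot>\<^sub>m sp n V (delta j)) {..<n} $$ (a,b)
     = (\<Sum>j<n. complex_of_real (d j) * (\<Sum>k<n. V $$ (a,k) * complex_of_real (delta j k) * cnj (V $$ (b,k))))"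
    using a b by simp
  also have "\<dots> = (\<Sum>j<n. complex_of_real (d j) * (V $$ (a,j) * cnj (V $$ (b,j))))"
    by (intro sum.cong refl) (simp add: delta_def ofr_if if10_mult sum.delta)
  also have "\<dots> = sp n V d $$ (a,b)" using a b by (simp add: algebra_simps)
  finally show "sp n V d $$ (a,b) = msum n (\<lambda>j. complex_of_real (d j) \<cdot>\<^sub>m sp n V (delta j)) {..<n} $$ (a,b)" by simp
qed auto

lemma dual_sp:
  assumes L': "linear_op_map n \<Phi>'"
  shows "\<Phi>' (sp n V d) = msum n (\<lambda>j. complex_of_real (d j) \<cdot>\<^sub>m \<Phi>' (sp n V (delta j))) {..<n}"
proof -
  have "\<Phi>' (sp n V d) = msum n (\<lambda>j. \<Phi>' (complex_of_real (d j) \<cdot>\<^sub>m sp n V (delta j))) {..<n}"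
    by (subst sp_decomp) (rule lin_msum[OF L'], auto)
  also have "\<dots> = msum n (\<lambda>j. complex_of_real (d j) \<cdot>\<^sub>m \<Phi>' (sp n V (delta j))) {..<n}"
    unfolding msum_def using lin_smult[OF L'] by simp
  finally show ?thesis .
qed

lemma msum_mult_vec:
  assumes z: "z \<in> carrier_vec n" and f: "\<And>s. s \<in> S \<Longrightarrow> f s \<in> carrier_mat n n"
  shows "msum n f S *\<^sub>v z = vec n (\<lambda>i. \<Sum>s\<in>S. (f s *\<^sub>v z) $ i)"
proof (rule eq_vecI)
  fix i assume "i < dim_vec (vec n (\<lambda>i. \<Sum>s\<in>S. (f s *\<^sub>v z) $ i))"
  then have i: "i < n" by simp
  have "(msum n f S *\<^sub>v z) $ i = (\<Sum>k<n. (\<Sum>s\<in>S. f s $$ (i,k)) * z $ k)"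
    using i z by (auto intro!: sum.cong)
  also have "\<dots> = (\<Sum>s\<in>S. \<Sum>k<n. f s $$ (i,k) * z $ k)"
    by (simp add: sum_distrib_right sum.swap[of _ "{..<n}"])
  also have "\<dots> = (\<Sum>s\<in>S. (f s *\<^sub>v z) $ i)"
  proof (rule sum.cong[OF refl])
    fix s assume "s \<in> S"
    then have "f s \<in> carrier_mat n n" by (rule f)
    then show "(\<Sum>k<n. f s $$ (i,k) * z $ k) = (f s *\<^sub>v z) $ i" using i z by simp
  qed
  finally show "(msum n f S *\<^sub>v z) $ i = vec n (\<lambda>i. \<Sum>s\<in>S. (f s *\<^sub>v z) $ i) $ i" using i by simp
qed (use z in auto)

lemma ip_msum:
  assumes y: "y \<in> carrier_vec n" and z: "z \<in> carrier_vec n" and f: "\<And>s. s \<in> S \<Longrightarrow> f s \<in> carrier_mat n n"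
  shows "ip y (msum n f S *\<^sub>v z) = (\<Sum>s\<in>S. ip y (f s *\<^sub>v z))"
proof -
  have e: "msum n f S *\<^sub>v z = vec n (\<lambda>i. \<Sum>s\<in>S. (f s *\<^sub>v z) $ i)" by (rule msum_mult_vec[OF z f])
  have "ip y (msum n f S *\<^sub>v z) = (\<Sum>i<n. cnj (y $ i) * (\<Sum>s\<in>S. (f s *\<^sub>v z) $ i))"
    unfolding e using y by (auto simp: ip_def intro!: sum.cong)
  also have "\<dots> = (\<Sum>s\<in>S. \<Sum>i<n. cnj (y $ i) * (f s *\<^sub>v z) $ i)"
    by (simp add: sum_distrib_left sum.swap[of _ "{..<n}"])
  also have "\<dots> = (\<Sum>s\<in>S. ip y (f s *\<^sub>v z))" using y by (simp add: ip_def)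
  finally show ?thesis .
qed

lemma ip_smult_mat:
  assumes Q: "Q \<in> carrier_mat n n" and z: "z \<in> carrier_vec n" and y: "y \<in> carrier_vec n"
  shows "ip y ((c \<cdot>\<^sub>m Q) *\<^sub>v z) = c * ip y (Q *\<^sub>v z)"
proof -
  have "(c \<cdot>\<^sub>m Q) *\<^sub>v z = c \<cdot>\<^sub>v (Q *\<^sub>v z)" using Q z by (intro eq_vecI) (auto simp: sum_distrib_left mult.assoc)
  then show ?thesis using Q z y by (simp add: ip_smult_right)
qed

lemma ip_msum_smult:
  assumes y: "y \<in> carrier_vec n" and z: "z \<in> carrier_vec n" and Q: "\<And>j. j < n \<Longrightarrow> Q j \<in> carrier_mat n n"
  shows "ip y (msum n (\<lambda>j. c j \<cdot>\<^sub>m Q j) {..<n} *\<^sub>v z) = (\<Sum>j<n. c j * ip y (Q j *\<^sub>v z))"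
proof -
  have fc: "\<And>j. j \<in> {..<n} \<Longrightarrow> c j \<cdot>\<^sub>m Q j \<in> carrier_mat n n" using Q by simp
  have "ip y (msum n (\<lambda>j. c j \<cdot>\<^sub>m Q j) {..<n} *\<^sub>v z) = (\<Sum>j<n. ip y ((c j \<cdot>\<^sub>m Q j) *\<^sub>v z))"
    by (rule ip_msum[OF y z fc])
  also have "\<dots> = (\<Sum>j<n. c j * ip y (Q j *\<^sub>v z))"
    by (rule sum.cong[OF refl]) (use Q z y in \<open>auto intro: ip_smult_mat\<close>)
  finally show ?thesis .
qed

lemma ip_msum_plain:
  assumes y: "y \<in> carrier_vec n" and z: "z \<in> carrier_vec n" and Q: "\<And>j. j < n \<Longrightarrow> Q j \<in> carrier_mat n n"
  shows "ip y (msum n Q {..<n} *\<^sub>v z) = (\<Sum>j<n. ip y (Q j *\<^sub>v z))"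
  by (rule ip_msum[OF y z]) (use Q in auto)

lemma ip_minus_left: "dim_vec y = dim_vec x \<Longrightarrow> dim_vec z = dim_vec x \<Longrightarrow> ip (y - z) x = ip y x - ip z x"
  by (simp add: ip_def sum_subtractf algebra_simps)

lemma kadison_schwarz:
  assumes Q: "\<And>j. j < n \<Longrightarrow> psd n (Q j)" and q: "\<And>j. j < n \<Longrightarrow> q j \<ge> 0"
    and A: "A = msum n (\<lambda>j. complex_of_real (q j) \<cdot>\<^sub>m Q j) {..<n}"
    and T: "T = msum n (\<lambda>j. complex_of_real (sqrt (q j)) \<cdot>\<^sub>m Q j) {..<n}"
    and I: "msum n Q {..<n} = 1\<^sub>m n"
    and hA: "hermitian n A" and hT: "hermitian n T"
  shows "psd n (A - T * T)"
proof -
  have Qc: "\<And>j. j < n \<Longrightarrow> Q j \<in> carrier_mat n n" using Q psd_carrier by blast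
  have Ac: "A \<in> carrier_mat n n" and Tc: "T \<in> carrier_mat n n" using A T by auto
  have herm: "hermitian n (A - T * T)"
  proof -
    have "cadj (T * T) = T * T" using Tc hT by (simp add: cadj_mult[of T n n T n] hermitian_def)
    then have "hermitian n (T * T)" using Tc by (simp add: hermitian_def)
    then show ?thesis by (rule herm_minus[OF hA])
  qed
  have "0 \<le> Re (ip x ((A - T * T) *\<^sub>v x))" if x: "x \<in> carrier_vec n" for x
  proof -
    define w where "w = T *\<^sub>v x"
    have w: "w \<in> carrier_vec n" using Tc x by (simp add: w_def)
    define y where "y j = complex_of_real (sqrt (q j)) \<cdot>\<^sub>v x - w" for j
    have y: "y j \<in> carrier_vec n" for j using x w by (simp add: y_def)
    have dims: "dim_vec x = n" "dim_vec w = n" "\<And>j. j < n \<Longrightarrow> dim_vec (Q j *\<^sub>v x) = n" "\<And>j. j < n \<Longrightarrow> dim_vec (Q j *\<^sub>v w) = n"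
      using x w Qc by auto
    have sq: "complex_of_real (sqrt (q j)) * complex_of_real (sqrt (q j)) = complex_of_real (q j)" if "j < n" for j
      using q[OF that] by (simp flip: of_real_mult)
    have yj: "ip (y j) (Q j *\<^sub>v y j) = complex_of_real (q j) * ip x (Q j *\<^sub>v x) - complex_of_real (sqrt (q j)) * ip x (Q j *\<^sub>v w)
        - complex_of_real (sqrt (q j)) * ip w (Q j *\<^sub>v x) + ip w (Q j *\<^sub>v w)" if j: "j < n" for j
    proof -
      have e: "Q j *\<^sub>v y j = complex_of_real (sqrt (q j)) \<cdot>\<^sub>v (Q j *\<^sub>v x) - Q j *\<^sub>v w"
        unfolding y_def using Qc[OF j] x w by (simp add: mult_minus_distrib_mat_vec[of _ n n] mult_mat_vec[of _ n n])
      have "ip (y j) (Q j *\<^sub>v y j) = ip (complex_of_real (sqrt (q j)) \<cdot>\<^sub>v x) (Q j *\<^sub>v y j) - ip w (Q j *\<^sub>v y j)"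
        unfolding y_def using dims j e by (intro ip_minus_left) auto
      also have "\<dots> = complex_of_real (sqrt (q j)) * ip x (Q j *\<^sub>v y j) - ip w (Q j *\<^sub>v y j)"
        by (simp add: ip_smult_left)
      also have "ip x (Q j *\<^sub>v y j) = complex_of_real (sqrt (q j)) * ip x (Q j *\<^sub>v x) - ip x (Q j *\<^sub>v w)"
        unfolding e using dims j by (simp add: ip_minus_right ip_smult_right)
      also have "ip w (Q j *\<^sub>v y j) = complex_of_real (sqrt (q j)) * ip w (Q j *\<^sub>v x) - ip w (Q j *\<^sub>v w)"
        unfolding e using dims j by (simp add: ip_minus_right ip_smult_right)
      finally show ?thesis using sq[OF j] by (simp add: algebra_simps)
    qed
    have sA: "ip x (A *\<^sub>v x) = (\<Sum>j<n. complex_of_real (q j) * ip x (Q j *\<^sub>v x))"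
      unfolding A by (rule ip_msum_smult[OF x x Qc])
    have sT1: "ip x (T *\<^sub>v w) = (\<Sum>j<n. complex_of_real (sqrt (q j)) * ip x (Q j *\<^sub>v w))"
      unfolding T by (rule ip_msum_smult[OF x w Qc])
    have sT2: "ip w (T *\<^sub>v x) = (\<Sum>j<n. complex_of_real (sqrt (q j)) * ip w (Q j *\<^sub>v x))"
      unfolding T by (rule ip_msum_smult[OF w x Qc])
    have sI: "ip w (1\<^sub>m n *\<^sub>v w) = (\<Sum>j<n. ip w (Q j *\<^sub>v w))"
      unfolding I[symmetric] by (rule ip_msum_plain[OF w w Qc])
    have "(\<Sum>j<n. ip (y j) (Q j *\<^sub>v y j)) = ip x (A *\<^sub>v x) - ip x (T *\<^sub>v w) - ip w (T *\<^sub>v x) + ip w (1\<^sub>m n *\<^sub>v w)"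
      unfolding sA sT1 sT2 sI by (simp add: yj sum.distrib sum_subtractf)
    also have "\<dots> = ip x (A *\<^sub>v x) - ip x (T *\<^sub>v w)" using w by (simp add: w_def)
    also have "\<dots> = ip x ((A - T * T) *\<^sub>v x)"
      using Ac Tc x dims by (simp add: w_def minus_mult_distrib_mat_vec[of _ n n] ip_minus_right)
    finally have "ip x ((A - T * T) *\<^sub>v x) = (\<Sum>j<n. ip (y j) (Q j *\<^sub>v y j))" by simp
    moreover have "0 \<le> (\<Sum>j<n. Re (ip (y j) (Q j *\<^sub>v y j)))"
      by (rule sum_nonneg) (use psd_qf[OF Q y] in auto)
    ultimately show ?thesis by simp
  qed
  then show ?thesis unfolding psd_def' using herm by auto
qed



lemma gibbs_sp:
  assumes U: "unitary n U" and n: "n > 0"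
  shows "free_energy n \<beta> (sp n U h) = - (1 / \<beta>) * ln (\<Sum>k<n. exp (- \<beta> * h k))"
    and "gibbs n \<beta> (sp n U h) = sp n U (\<lambda>k. exp (\<beta> * (free_energy n \<beta> (sp n U h) - h k)))"
proof -
  have "complex_of_real (- \<beta>) \<cdot>\<^sub>m sp n U h = sp n U (\<lambda>k. - \<beta> * h k)" by (rule sp_smult)
  then have "mat_exp (complex_of_real (- \<beta>) \<cdot>\<^sub>m sp n U h) = sp n U (\<lambda>k. exp (- \<beta> * h k))"
    by (simp add: mat_exp_sp[OF U])
  then have "trace (mat_exp (complex_of_real (- \<beta>) \<cdot>\<^sub>m sp n U h)) = (\<Sum>k<n. complex_of_real (exp (- \<beta> * h k)))"
    by (simp add: trace_sp[OF U])
  then show F: "free_energy n \<beta> (sp n U h) = - (1 / \<beta>) * ln (\<Sum>k<n. exp (- \<beta> * h k))"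
    unfolding free_energy_def by (simp flip: of_real_sum)
  define F where "F = free_energy n \<beta> (sp n U h)"
  have "complex_of_real F \<cdot>\<^sub>m 1\<^sub>m n - sp n U h = sp n U (\<lambda>k. F - h k)"
    unfolding sp_one[OF U, symmetric] sp_smult sp_minus by simp
  then have "complex_of_real \<beta> \<cdot>\<^sub>m (complex_of_real F \<cdot>\<^sub>m 1\<^sub>m n - sp n U h) = sp n U (\<lambda>k. \<beta> * (F - h k))"
    by (simp add: sp_smult)
  then show "gibbs n \<beta> (sp n U h) = sp n U (\<lambda>k. exp (\<beta> * (free_energy n \<beta> (sp n U h) - h k)))"
    unfolding gibbs_def F_def[symmetric] by (simp add: mat_exp_sp[OF U])
qed

lemma gibbs_weights:
  fixes n :: nat and \<beta> F :: real and h :: "nat \<Rightarrow> real"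
  assumes b: "\<beta> > 0" and n: "n > 0"
    and F: "F = - (1 / \<beta>) * ln (\<Sum>k<n. exp (- \<beta> * h k))"
  shows "(\<Sum>k<n. exp (\<beta> * (F - h k))) = 1"
proof -
  define Z where "Z = (\<Sum>k<n. exp (- \<beta> * h k))"
  have Z: "Z > 0" unfolding Z_def by (rule sum_pos) (use n in auto)
  have FZ: "F = - (1 / \<beta>) * ln Z" unfolding F Z_def ..
  have "\<beta> * F = - ln Z" using b by (simp add: FZ)
  then have "exp (\<beta> * F) = 1 / Z" using Z by (simp add: exp_minus inverse_eq_divide)
  then have "exp (\<beta> * (F - h k)) = exp (- \<beta> * h k) / Z" for k
    by (simp add: right_diff_distrib exp_diff exp_minus field_simps)
  then show ?thesis using Z by (simp add: sum_divide_distrib[symmetric] Z_def)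
qed

lemma jensen_ln:
  fixes w r :: "'a \<Rightarrow> real"
  assumes I: "finite I" and w: "\<And>k. k \<in> I \<Longrightarrow> w k \<ge> 0" and w1: "(\<Sum>k\<in>I. w k) = 1"
    and r: "\<And>k. k \<in> I \<Longrightarrow> r k > 0"
  shows "(\<Sum>k\<in>I. w k * ln (r k)) \<le> ln (\<Sum>k\<in>I. w k * r k)"
proof -
  define m where "m = (\<Sum>k\<in>I. w k * r k)"
  have "\<exists>k\<in>I. w k > 0"
  proof (rule ccontr)
    assume nw: "\<not> (\<exists>k\<in>I. w k > 0)"
    have "\<And>k. k \<in> I \<Longrightarrow> w k = 0"
    proof -
      fix k assume k: "k \<in> I"
      then have "\<not> w k > 0" using nw by blast
      then show "w k = 0" using w[OF k] by simp
    qed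
    then show False using w1 by simp
  qed
  then obtain k0 where k0: "k0 \<in> I" "w k0 > 0" by blast
  have m: "m > 0" unfolding m_def by (rule sum_pos2[of I k0]) (use k0 w r I in \<open>auto intro: mult_nonneg_nonneg less_imp_le\<close>)
  have "(\<Sum>k\<in>I. w k * ln (r k / m)) = (\<Sum>k\<in>I. w k * (ln (r k) - ln m))"
  proof (rule sum.cong[OF refl])
    fix k assume k: "k \<in> I"
    show "w k * ln (r k / m) = w k * (ln (r k) - ln m)" using r[OF k] m by (simp add: ln_div)
  qed
  also have "\<dots> = (\<Sum>k\<in>I. w k * ln (r k)) - ln m * (\<Sum>k\<in>I. w k)"
    by (simp add: right_diff_distrib sum_subtractf sum_distrib_left mult.commute)
  finally have "(\<Sum>k\<in>I. w k * ln (r k)) - ln m = (\<Sum>k\<in>I. w k * ln (r k / m))" using w1 by simp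
  also have "\<dots> \<le> (\<Sum>k\<in>I. w k * (r k / m - 1))"
    using r m w by (intro sum_mono mult_left_mono ln_le_minus_one) auto
  also have "\<dots> = 0"
    using m w1 by (simp add: algebra_simps sum_subtractf sum_divide_distrib[symmetric] m_def sum_distrib_left[symmetric])
  finally show ?thesis by (simp add: m_def)
qed

lemma pos_comb:
  fixes n :: nat and q r :: "nat \<Rightarrow> real"
  assumes q: "\<And>j. j < n \<Longrightarrow> q j > 0" and r: "\<And>j. j < n \<Longrightarrow> r j \<ge> 0" and r1: "(\<Sum>j<n. r j) = (1::real)"
  shows "(\<Sum>j<n. q j * r j) > 0"
proof -
  have "\<exists>j<n. r j > 0"
  proof (rule ccontr)
    assume "\<not> ?thesis"
    then have "\<And>j. j < n \<Longrightarrow> r j = 0" using r by (meson linorder_neqE_linordered_idom not_le)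
    then show False using r1 by simp
  qed
  then obtain j0 where "j0 < n" "r j0 > 0" by blast
  then show ?thesis by (intro sum_pos2[of "{..<n}" j0]) (use q r in \<open>auto intro: mult_nonneg_nonneg less_imp_le\<close>)
qed

lemma smult_smult_m: "a \<cdot>\<^sub>m (b \<cdot>\<^sub>m (A::complex mat)) = (a * b) \<cdot>\<^sub>m A"
  by (intro eq_matI) auto

lemma trace_norm_smult:
  assumes X: "X \<in> carrier_mat n n" and c: "c \<ge> 0"
  shows "trace_norm (complex_of_real c \<cdot>\<^sub>m X) = c * trace_norm X"
proof -
  have M: "psd n (cadj X * X)" by (rule psd_cadj_mult[OF X])
  have "cadj (complex_of_real c \<cdot>\<^sub>m X) * (complex_of_real c \<cdot>\<^sub>m X) = complex_of_real (c * c) \<cdot>\<^sub>m (cadj X * X)"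
    using X by (simp add: cadj_smult mult_smult_assoc_mat[of _ n n] mult_smult_distrib[of _ n n] smult_smult_m)
  then have "psd_sqrt (cadj (complex_of_real c \<cdot>\<^sub>m X) * (complex_of_real c \<cdot>\<^sub>m X)) = complex_of_real (sqrt (c * c)) \<cdot>\<^sub>m psd_sqrt (cadj X * X)"
    using psd_sqrt_smult[OF M, of "c * c"] by simp
  also have "sqrt (c * c) = c" using c by simp
  finally show ?thesis unfolding trace_norm_def
    using psd_sqrt_carrier[OF M] by (simp add: trace_smult[of _ n])
qed

lemma dual_qf:
  assumes D: "is_trace_dual n \<Phi> \<Phi>'" and Y: "Y \<in> carrier_mat n n" and x: "x \<in> carrier_vec n"
  shows "ip x (\<Phi>' Y *\<^sub>v x) = trace (\<Phi> (outer n x) * Y)"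
proof -
  have Qc: "\<Phi>' Y \<in> carrier_mat n n" using D Y by (simp add: is_trace_dual_def)
  have "ip x (\<Phi>' Y *\<^sub>v x) = trace (\<Phi>' Y * outer n x)" using trace_outer[OF Qc x] by simp
  also have "\<dots> = trace (outer n x * \<Phi>' Y)" using Qc by (intro trace_comm) auto
  also have "\<dots> = trace (\<Phi> (outer n x) * Y)" using D Y by (simp add: is_trace_dual_def)
  finally show ?thesis .
qed

lemma outer_col:
  assumes U: "U \<in> carrier_mat n n" and i: "i < n"
  shows "outer n (col U i) = sp n U (delta i)"
proof (rule eq_matI)
  fix a b assume "a < dim_row (sp n U (delta i))" "b < dim_col (sp n U (delta i))"
  then have a: "a < n" and b: "b < n" by auto
  have "sp n U (delta i) $$ (a,b) = (\<Sum>k<n. if k = i then U $$ (a,k) * cnj (U $$ (b,k)) else 0)"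
    using a b by (simp add: delta_def ofr_if if10_mult)
  also have "\<dots> = outer n (col U i) $$ (a,b)" using a b i U by (simp add: outer_def)
  finally show "outer n (col U i) $$ (a,b) = sp n U (delta i) $$ (a,b)" by simp
qed (auto simp: outer_def)

lemma trace_delta: "unitary n U \<Longrightarrow> i < n \<Longrightarrow> trace (sp n U (delta i)) = 1"
  by (simp add: trace_sp delta_def ofr_if)

lemma psd_delta: "U \<in> carrier_mat n n \<Longrightarrow> psd n (sp n U (delta i))"
  by (rule psd_sp) (auto simp: delta_def)

lemma trace_mult_delta:
  assumes M: "M \<in> carrier_mat n n" and U: "U \<in> carrier_mat n n" and j: "j < n"
  shows "trace (M * sp n U (delta j)) = ip (col U j) (M *\<^sub>v col U j)"
  unfolding trace_mult_sp[OF M U] using j by (simp add: delta_def ofr_if if10_mult)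



lemma sin_ge_xcos:
  assumes x: "0 \<le> x" "x \<le> pi / 2"
  shows "x * cos x \<le> sin x"
proof -
  let ?k = "\<lambda>t. sin t - t * cos t"
  have "?k 0 \<le> ?k x"
  proof (rule DERIV_nonneg_imp_nondecreasing[OF x(1)])
    fix t assume t: "0 \<le> t" "t \<le> x"
    have "DERIV ?k t :> (cos t - (1 * cos t + t * (- sin t)))"
      by (intro derivative_eq_intros) auto
    moreover have "0 \<le> cos t - (1 * cos t + t * (- sin t))"
      using t x by (simp add: sin_ge_zero)
    ultimately show "\<exists>y. DERIV ?k t :> y \<and> 0 \<le> y" by blast
  qed
  then show ?thesis by simp
qed

lemma ln_cos_le:
  assumes x: "0 \<le> x" "x < pi / 2"
  shows "ln (cos x) \<le> - (x\<^sup>2 / 2)"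
proof -
  let ?g = "\<lambda>t. ln (cos t) + t\<^sup>2 / 2"
  have "?g x \<le> ?g 0"
  proof (rule DERIV_nonpos_imp_nonincreasing[OF x(1)])
    fix t assume t: "0 \<le> t" "t \<le> x"
    have c: "cos t > 0" using t x by (intro cos_gt_zero_pi) auto
    have "DERIV ?g t :> (- sin t / cos t + t)"
      using c by (auto intro!: derivative_eq_intros simp: power2_eq_square field_simps)
    moreover have "- sin t / cos t + t \<le> 0"
    proof -
      have "t * cos t \<le> sin t" using t x by (intro sin_ge_xcos) auto
      then have "t \<le> sin t / cos t" using c by (simp add: field_simps)
      then show ?thesis by simp
    qed
    ultimately show "\<exists>y. DERIV ?g t :> y \<and> y \<le> 0" by blast
  qed
  then show ?thesis by simp
qed

lemma bures_bound:
  assumes F: "0 < F" "F \<le> 1"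
  shows "8 / pi\<^sup>2 * (arccos F)\<^sup>2 \<le> - 2 * ln F"
proof -
  define L where "L = arccos F"
  have L0: "0 \<le> L" unfolding L_def using F by (intro arccos_lbound) auto
  have "arccos F < arccos 0" using F by (intro arccos_less_arccos) auto
  then have L1: "L < pi / 2" by (simp add: L_def)
  have cL: "cos L = F" unfolding L_def using F by simp
  have "ln F \<le> - (L\<^sup>2 / 2)" using ln_cos_le[OF L0 L1] cL by simp
  then have a: "L\<^sup>2 \<le> - 2 * ln F" by simp
  have p: "8 / pi\<^sup>2 \<le> 1"
  proof -
    have "sin (pi / 4) \<le> pi / 4" by (rule sin_x_le_x) simp
    then have "sqrt 2 / 2 \<le> pi / 4" by (simp add: sin_45)
    then have h: "2 * sqrt 2 \<le> pi" by simp
    have "(2 * sqrt 2)\<^sup>2 \<le> pi\<^sup>2" using h by (intro power_mono) auto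
    then have "8 \<le> pi\<^sup>2" by (simp add: power_mult_distrib)
    then show ?thesis by simp
  qed
  have "8 / pi\<^sup>2 * L\<^sup>2 \<le> 1 * L\<^sup>2" using p by (intro mult_right_mono) auto
  then show ?thesis using a by (simp add: L_def)
qed


lemma final_comb:
  assumes tau: "tau > 0" and z: "z > 0" and F: "F > 0" "F \<le> 1" and lb: "sqrt (1 / z) * tau \<le> F"
    and X: "X \<ge> - 2 * ln tau"
  shows "X \<ge> 8 / pi\<^sup>2 * (arccos F)\<^sup>2 - ln z"
proof -
  have "tau \<le> sqrt z * F"
  proof -
    have "sqrt z * (sqrt (1 / z) * tau) \<le> sqrt z * F" using lb z by (intro mult_left_mono) auto
    moreover have "sqrt z * sqrt (1 / z) = 1" using z by (simp add: real_sqrt_divide)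
    ultimately show ?thesis by (simp add: mult.assoc[symmetric])
  qed
  then have "ln tau \<le> ln (sqrt z * F)" using tau by simp
  also have "ln (sqrt z * F) = ln z / 2 + ln F" using z F by (simp add: ln_mult ln_sqrt)
  finally have "- 2 * ln tau \<ge> - ln z - 2 * ln F" by simp
  moreover have "8 / pi\<^sup>2 * (arccos F)\<^sup>2 \<le> - 2 * ln F" using bures_bound F by simp
  ultimately show ?thesis using X by simp
qed

lemma double_sum_split:
  fixes p x :: "nat \<Rightarrow> real" and y :: "nat \<Rightarrow> real" and a :: "nat \<Rightarrow> nat \<Rightarrow> real"
  shows "(\<Sum>i<n. \<Sum>j<n. p i * a i j * (x i + y j)) = (\<Sum>i<n. p i * x i * (\<Sum>j<n. a i j)) + (\<Sum>j<n. y j * (\<Sum>i<n. p i * a i j))"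
proof -
  have "(\<Sum>i<n. \<Sum>j<n. p i * a i j * (x i + y j)) = (\<Sum>i<n. \<Sum>j<n. p i * x i * a i j) + (\<Sum>i<n. \<Sum>j<n. p i * a i j * y j)"
    by (simp add: distrib_left sum.distrib algebra_simps)
  also have "(\<Sum>i<n. \<Sum>j<n. p i * a i j * y j) = (\<Sum>j<n. \<Sum>i<n. p i * a i j * y j)" by (rule sum.swap)
  finally show ?thesis by (simp add: sum_distrib_left sum_distrib_right mult.commute mult.left_commute)
qed

lemma jensen_pairs:
  fixes p q :: "nat \<Rightarrow> real" and a :: "nat \<Rightarrow> nat \<Rightarrow> real"
  assumes p: "\<And>i. i < n \<Longrightarrow> p i > 0" and q: "\<And>j. j < n \<Longrightarrow> q j > 0" and a: "\<And>i j. i < n \<Longrightarrow> j < n \<Longrightarrow> a i j \<ge> 0"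
    and s: "(\<Sum>i<n. \<Sum>j<n. p i * a i j) = 1"
  shows "(\<Sum>i<n. \<Sum>j<n. p i * a i j * (ln (p i) - ln (q j))) \<ge> - 2 * ln (\<Sum>i<n. sqrt (p i) * (\<Sum>j<n. sqrt (q j) * a i j))"
proof -
  let ?I = "{..<n} \<times> {..<n}"
  define w where "w = (\<lambda>(i,j). p i * a i j)"
  define r where "r = (\<lambda>(i,j). sqrt (q j) / sqrt (p i))"
  have cp: "\<And>f. (\<Sum>i<n. \<Sum>j<n. f i j) = (\<Sum>(i,j)\<in>?I. f i j)" by (simp add: sum.cartesian_product)
  have cp2: "\<And>f. (\<Sum>k\<in>?I. f k) = (\<Sum>i<n. \<Sum>j<n. f (i,j))" by (simp add: sum.cartesian_product)
  have "(\<Sum>k\<in>?I. w k * ln (r k)) \<le> ln (\<Sum>k\<in>?I. w k * r k)"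
  proof (rule jensen_ln)
    show "finite ?I" by simp
    show "\<And>k. k \<in> ?I \<Longrightarrow> w k \<ge> 0" using p a by (auto simp: w_def intro: mult_nonneg_nonneg less_imp_le)
    show "(\<Sum>k\<in>?I. w k) = 1" using s by (simp add: cp w_def)
    show "\<And>k. k \<in> ?I \<Longrightarrow> r k > 0" using p q by (auto simp: r_def)
  qed
  moreover have "(\<Sum>k\<in>?I. w k * ln (r k)) = (\<Sum>i<n. \<Sum>j<n. p i * a i j * (ln (p i) - ln (q j))) / (- 2)"
  proof -
    have "(\<Sum>k\<in>?I. w k * ln (r k)) = (\<Sum>i<n. \<Sum>j<n. p i * a i j * ((ln (p i) - ln (q j)) / (- 2)))"
      unfolding cp2 w_def r_def
    proof (intro sum.cong refl)
      fix i j assume i: "i \<in> {..<n}" and j: "j \<in> {..<n}"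
      have pi: "p i > 0" and qj: "q j > 0" using p q i j by auto
      have "ln (sqrt (q j) / sqrt (p i)) = (ln (p i) - ln (q j)) / (- 2)"
        using pi qj by (simp add: ln_div ln_sqrt field_simps)
      then show "(case (i, j) of (i, j) \<Rightarrow> p i * a i j) * ln (case (i, j) of (i, j) \<Rightarrow> sqrt (q j) / sqrt (p i))
           = p i * a i j * ((ln (p i) - ln (q j)) / (- 2))" by simp
    qed
    then show ?thesis by (simp add: sum_divide_distrib sum_negf)
  qed
  moreover have "(\<Sum>k\<in>?I. w k * r k) = (\<Sum>i<n. sqrt (p i) * (\<Sum>j<n. sqrt (q j) * a i j))"
  proof -
    have "(\<Sum>k\<in>?I. w k * r k) = (\<Sum>i<n. \<Sum>j<n. sqrt (p i) * (sqrt (q j) * a i j))"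
      unfolding cp2 w_def r_def
    proof (intro sum.cong refl)
      fix i j assume i: "i \<in> {..<n}"
      have pi: "p i > 0" using p i by simp
      have e: "p i / sqrt (p i) = sqrt (p i)" using pi by (simp add: real_div_sqrt)
      have "p i * a i j * (sqrt (q j) / sqrt (p i)) = (p i / sqrt (p i)) * (sqrt (q j) * a i j)" by simp
      then show "(case (i, j) of (i, j) \<Rightarrow> p i * a i j) * (case (i, j) of (i, j) \<Rightarrow> sqrt (q j) / sqrt (p i)) = sqrt (p i) * (sqrt (q j) * a i j)"
        unfolding e by simp
    qed
    then show ?thesis by (simp add: sum_distrib_left)
  qed
  ultimately show ?thesis by simp
qed



theorem mainTheorem2:
  fixes n :: nat and \<beta> :: real
    and \<Phi> \<Phi>' :: "complex mat \<Rightarrow> complex mat"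
    and H0 H\<tau> :: "complex mat"
  assumes "n > 0"
    and "CPTP n \<Phi>"
    and "is_trace_dual n \<Phi> \<Phi>'"
    and "hermitian n H0" and "hermitian n H\<tau>"
    and "\<beta> > 0"
  shows "let \<Gamma>0 = gibbs n \<beta> H0; \<Gamma>\<tau> = gibbs n \<beta> H\<tau>;
             \<Delta>F = free_energy n \<beta> H\<tau> - free_energy n \<beta> H0;
             \<Delta>E = Re (trace (\<Phi> \<Gamma>0 * H\<tau>)) - Re (trace (\<Gamma>0 * H0));
             Z = trace (\<Phi>' \<Gamma>\<tau>);
             \<gamma> = (1 / Z) \<cdot>\<^sub>m \<Phi>' \<Gamma>\<tau>
         in \<beta> * (\<Delta>E - \<Delta>F) \<ge> 8 / pi\<^sup>2 * (bures_angle \<Gamma>0 \<gamma>)\<^sup>2 - ln (Re Z)"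
proof -
  note n = assms(1) and D = assms(3) and b = assms(6)
  have L: "linear_op_map n \<Phi>" and C: "completely_positive n \<Phi>" and TP: "trace_preserving n \<Phi>"
    using assms(2) by (auto simp: CPTP_def)
  have L': "linear_op_map n \<Phi>'" by (rule dual_linear[OF L D])
  obtain U h where U: "unitary n U" and H0: "H0 = sp n U h" using spectral[OF assms(4)] by blast
  obtain V g where V: "unitary n V" and Ht: "H\<tau> = sp n V g" using spectral[OF assms(5)] by blast
  have Uc: "U \<in> carrier_mat n n" and Vc: "V \<in> carrier_mat n n" using U V by (auto simp: unitary_def)
  define F0 where "F0 = free_energy n \<beta> H0"
  define Ft where "Ft = free_energy n \<beta> H\<tau>"
  define p where "p k = exp (\<beta> * (F0 - h k))" for k
  define q where "q k = exp (\<beta> * (Ft - g k))" for k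
  have pf: "p = (\<lambda>k. exp (\<beta> * (F0 - h k)))" by (rule ext) (simp add: p_def)
  have qf: "q = (\<lambda>k. exp (\<beta> * (Ft - g k)))" by (rule ext) (simp add: q_def)
  have G0: "gibbs n \<beta> H0 = sp n U p" using gibbs_sp(2)[OF U n, of \<beta> h] H0 by (simp add: pf F0_def)
  have Gt: "gibbs n \<beta> H\<tau> = sp n V q" using gibbs_sp(2)[OF V n, of \<beta> g] Ht by (simp add: qf Ft_def)
  have p1: "(\<Sum>k<n. p k) = 1" unfolding p_def
    by (rule gibbs_weights[OF b n]) (use gibbs_sp(1)[OF U n, of \<beta> h] H0 F0_def in simp)
  have q1: "(\<Sum>k<n. q k) = 1" unfolding q_def
    by (rule gibbs_weights[OF b n]) (use gibbs_sp(1)[OF V n, of \<beta> g] Ht Ft_def in simp)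
  have ppos: "\<And>k. p k > 0" and qpos: "\<And>k. q k > 0" by (auto simp: p_def q_def)
  have lnp: "\<And>k. ln (p k) = \<beta> * F0 - \<beta> * h k" by (simp add: p_def algebra_simps)
  have lnq: "\<And>k. ln (q k) = \<beta> * Ft - \<beta> * g k" by (simp add: q_def algebra_simps)

  define R where "R i = sp n U (delta i)" for i
  define S where "S j = sp n V (delta j)" for j
  define Q where "Q j = \<Phi>' (S j)" for j
  define a where "a i j = Re (ip (col V j) (\<Phi> (R i) *\<^sub>v col V j))" for i j
  have Rc: "\<And>i. R i \<in> carrier_mat n n" and Sc: "\<And>j. S j \<in> carrier_mat n n" by (auto simp: R_def S_def)
  have PR: "\<And>i. psd n (\<Phi> (R i))" unfolding R_def by (rule cp_positive[OF L C psd_delta[OF Uc]])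
  have PRc: "\<And>i. \<Phi> (R i) \<in> carrier_mat n n" using PR psd_carrier by blast
  have a_eq: "ip (col V j) (\<Phi> (R i) *\<^sub>v col V j) = complex_of_real (a i j)" if "j < n" for i j
    unfolding a_def using herm_qf_ofreal[OF psd_herm[OF PR], of "col V j" i] Vc that by simp
  have a_nn: "a i j \<ge> 0" if "j < n" for i j
    unfolding a_def using psd_qf[OF PR, of "col V j" i] Vc that by simp
  have a_sum: "(\<Sum>j<n. a i j) = 1" if i: "i < n" for i
  proof -
    have "trace (\<Phi> (R i)) = (\<Sum>j<n. ip (col V j) (\<Phi> (R i) *\<^sub>v col V j))" by (rule trace_basis[OF V PRc])
    also have "\<dots> = complex_of_real (\<Sum>j<n. a i j)" by (simp add: a_eq of_real_sum)
    finally have "complex_of_real (\<Sum>j<n. a i j) = trace (R i)" using TP Rc by (simp add: trace_preserving_def)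
    also have "trace (R i) = 1" unfolding R_def by (rule trace_delta[OF U i])
    finally have "complex_of_real (\<Sum>j<n. a i j) = 1" .
    then show ?thesis using of_real_eq_1_iff by blast
  qed
  have Qpsd: "\<And>j. psd n (Q j)" unfolding Q_def S_def by (rule dual_positive[OF L C D psd_delta[OF Vc]])
  have Qc: "\<And>j. Q j \<in> carrier_mat n n" using Qpsd psd_carrier by blast
  have Q_qf: "ip (col U i) (Q j *\<^sub>v col U i) = complex_of_real (a i j)" if i: "i < n" and j: "j < n" for i j
  proof -
    have "ip (col U i) (Q j *\<^sub>v col U i) = trace (\<Phi> (outer n (col U i)) * S j)"
      unfolding Q_def using Uc i by (intro dual_qf[OF D Sc]) auto
    also have "\<dots> = trace (\<Phi> (R i) * S j)" unfolding R_def outer_col[OF Uc i] ..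
    also have "\<dots> = ip (col V j) (\<Phi> (R i) *\<^sub>v col V j)" unfolding S_def by (rule trace_mult_delta[OF PRc Vc j])
    finally show ?thesis using a_eq[OF j] by simp
  qed
  have Qsum: "msum n Q {..<n} = 1\<^sub>m n"
  proof -
    have "\<Phi>' (sp n V (\<lambda>_. 1)) = msum n (\<lambda>j. complex_of_real 1 \<cdot>\<^sub>m Q j) {..<n}"
      unfolding Q_def S_def by (rule dual_sp[OF L'])
    also have "\<dots> = msum n Q {..<n}"
    proof -
      have "\<And>j. complex_of_real 1 \<cdot>\<^sub>m Q j = Q j" using Qc by (intro eq_matI) auto
      then show ?thesis by simp
    qed
    finally show ?thesis using dual_one[OF L TP D] sp_one[OF V] by simp
  qed
  define A where "A = \<Phi>' (sp n V q)"
  define T where "T = \<Phi>' (sp n V (\<lambda>k. sqrt (q k)))"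
  have A_eq: "A = msum n (\<lambda>j. complex_of_real (q j) \<cdot>\<^sub>m Q j) {..<n}"
    unfolding A_def Q_def S_def by (rule dual_sp[OF L'])
  have T_eq: "T = msum n (\<lambda>j. complex_of_real (sqrt (q j)) \<cdot>\<^sub>m Q j) {..<n}"
    unfolding T_def Q_def S_def by (rule dual_sp[OF L'])
  have Apsd: "psd n A" unfolding A_def by (rule dual_positive[OF L C D psd_sp[OF Vc]]) (simp add: less_imp_le[OF qpos])
  have Tpsd: "psd n T" unfolding T_def by (rule dual_positive[OF L C D psd_sp[OF Vc]]) (simp add: less_imp_le[OF qpos])
  have Ac: "A \<in> carrier_mat n n" and Tc: "T \<in> carrier_mat n n" using Apsd Tpsd psd_carrier by auto
  have KS: "psd n (A - T * T)"
    by (rule kadison_schwarz[OF Qpsd _ A_eq T_eq Qsum psd_herm[OF Apsd] psd_herm[OF Tpsd]]) (simp add: less_imp_le[OF qpos])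
  define SA where "SA = psd_sqrt A"
  have SApsd: "psd n SA" unfolding SA_def by (rule psd_sqrt_psd[OF Apsd])
  have SAc: "SA \<in> carrier_mat n n" using SApsd psd_carrier by auto
  have SAsq: "SA * SA = A" unfolding SA_def by (rule psd_sqrt_sq[OF Apsd])
  have mono: "psd n (SA - T)" by (rule psd_sq_mono[OF Tpsd SApsd]) (use KS SAsq in simp)

  define tau where "tau = (\<Sum>i<n. sqrt (p i) * (\<Sum>j<n. sqrt (q j) * a i j))"
  have T_qf: "ip (col U i) (T *\<^sub>v col U i) = complex_of_real (\<Sum>j<n. sqrt (q j) * a i j)" if i: "i < n" for i
    unfolding T_eq using Uc i by (simp add: ip_msum_smult[OF _ _ Qc] Q_qf of_real_sum)
  have SA_ge: "Re (ip (col U i) (SA *\<^sub>v col U i)) \<ge> (\<Sum>j<n. sqrt (q j) * a i j)" if i: "i < n" for i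
  proof -
    have u: "col U i \<in> carrier_vec n" using Uc i by simp
    have "0 \<le> Re (ip (col U i) ((SA - T) *\<^sub>v col U i))" by (rule psd_qf[OF mono u])
    also have "ip (col U i) ((SA - T) *\<^sub>v col U i) = ip (col U i) (SA *\<^sub>v col U i) - ip (col U i) (T *\<^sub>v col U i)"
    proof -
      have "(SA - T) *\<^sub>v col U i = SA *\<^sub>v col U i - T *\<^sub>v col U i"
        using SAc Tc u by (rule minus_mult_distrib_mat_vec)
      moreover have "dim_vec (SA *\<^sub>v col U i) = dim_vec (col U i)" "dim_vec (T *\<^sub>v col U i) = dim_vec (col U i)"
        using SAc Tc u Uc by auto
      ultimately show ?thesis by (simp add: ip_minus_right)
    qed
    finally show ?thesis using T_qf[OF i] by simp
  qed
  define P where "P = psd_sqrt (gibbs n \<beta> H0)"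
  have P_eq: "P = sp n U (\<lambda>k. sqrt (p k))" unfolding P_def G0 by (rule psd_sqrt_sp[OF U]) (simp add: less_imp_le[OF ppos])
  have Ppsd: "psd n P" unfolding P_eq by (rule psd_sp[OF Uc]) (simp add: less_imp_le[OF ppos])
  have Pc: "P \<in> carrier_mat n n" using Ppsd psd_carrier by auto
  have tr1: "Re (trace (P * SA)) \<ge> tau"
  proof -
    have "trace (P * SA) = trace (SA * P)" using Pc SAc by (rule trace_comm)
    also have "\<dots> = (\<Sum>i<n. complex_of_real (sqrt (p i)) * ip (col U i) (SA *\<^sub>v col U i))"
      unfolding P_eq by (rule trace_mult_sp[OF SAc Uc])
    finally have "Re (trace (P * SA)) = (\<Sum>i<n. sqrt (p i) * Re (ip (col U i) (SA *\<^sub>v col U i)))" by simp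
    moreover have "tau \<le> (\<Sum>i<n. sqrt (p i) * Re (ip (col U i) (SA *\<^sub>v col U i)))"
      unfolding tau_def by (intro sum_mono mult_left_mono SA_ge) (auto simp: less_imp_le[OF ppos])
    ultimately show ?thesis by simp
  qed
  have tn1: "trace_norm (P * SA) \<ge> tau"
    using tr1 re_trace_le_norm[of "P * SA" n] Pc SAc by simp

  define z where "z = (\<Sum>i<n. \<Sum>j<n. q j * a i j)"
  have trA: "trace A = complex_of_real z"
  proof -
    have "trace A = (\<Sum>i<n. ip (col U i) (A *\<^sub>v col U i))" by (rule trace_basis[OF U Ac])
    also have "\<dots> = (\<Sum>i<n. \<Sum>j<n. complex_of_real (q j) * complex_of_real (a i j))"
      unfolding A_eq using Uc by (intro sum.cong refl) (simp add: ip_msum_smult[OF _ _ Qc] Q_qf)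
    also have "\<dots> = complex_of_real z" by (simp add: z_def of_real_sum)
    finally show ?thesis .
  qed
  have inner_pos: "(\<Sum>j<n. q j * a i j) > 0" if "i < n" for i
    by (rule pos_comb) (use qpos a_nn a_sum[OF that] in auto)
  have zpos: "z > 0" unfolding z_def by (rule sum_pos) (use n inner_pos in auto)
  have tau_pos: "tau > 0"
  proof -
    have "(\<Sum>j<n. sqrt (q j) * a i j) > 0" if "i < n" for i
      by (rule pos_comb) (use qpos a_nn a_sum[OF that] in auto)
    then show ?thesis unfolding tau_def by (intro sum_pos) (use n ppos in auto)
  qed
  define \<gamma> where "\<gamma> = (1 / trace A) \<cdot>\<^sub>m A"
  have gam_eq: "\<gamma> = complex_of_real (1 / z) \<cdot>\<^sub>m A" by (simp add: \<gamma>_def trA)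
  have gam_psd: "psd n \<gamma>" unfolding gam_eq by (rule psd_smult[OF Apsd]) (use zpos in simp)
  have sq_gam: "psd_sqrt \<gamma> = complex_of_real (sqrt (1 / z)) \<cdot>\<^sub>m SA"
    unfolding gam_eq SA_def by (rule psd_sqrt_smult[OF Apsd]) (use zpos in simp)
  define fid where "fid = fidelity (gibbs n \<beta> H0) \<gamma>"
  have fid_eq: "fid = sqrt (1 / z) * trace_norm (P * SA)"
  proof -
    have "fid = trace_norm (P * (complex_of_real (sqrt (1 / z)) \<cdot>\<^sub>m SA))"
      unfolding fid_def fidelity_def P_def[symmetric] sq_gam ..
    also have "P * (complex_of_real (sqrt (1 / z)) \<cdot>\<^sub>m SA) = complex_of_real (sqrt (1 / z)) \<cdot>\<^sub>m (P * SA)"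
      by (rule mult_smult_distrib[OF Pc SAc])
    also have "trace_norm \<dots> = sqrt (1 / z) * trace_norm (P * SA)"
      by (rule trace_norm_smult[of _ n]) (use Pc SAc zpos in auto)
    finally show ?thesis .
  qed
  have fid_lb: "sqrt (1 / z) * tau \<le> fid" unfolding fid_eq using tn1 zpos by (intro mult_left_mono) auto
  have fid_pos: "fid > 0" using fid_lb tau_pos zpos by (smt (verit) mult_pos_pos real_sqrt_gt_zero divide_pos_pos)
  have fid_le: "fid \<le> 1"
  proof -
    obtain W c where W: "unitary n W" and c0: "\<And>k. k < n \<Longrightarrow> c k \<ge> 0" and gW: "\<gamma> = sp n W c"
      and sgW: "psd_sqrt \<gamma> = sp n W (\<lambda>k. sqrt (c k))" using psd_spec[OF gam_psd] by blast
    have Wc: "W \<in> carrier_mat n n" using W by (simp add: unitary_def)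
    have cpos: "c k > 0" if k: "k < n" for k
    proof -
      define w where "w = col W k"
      have w: "w \<in> carrier_vec n" using Wc k by (simp add: w_def)
      define r where "r j = Re (ip w (Q j *\<^sub>v w))" for j
      have r_eq: "ip w (Q j *\<^sub>v w) = complex_of_real (r j)" for j
        unfolding r_def by (rule herm_qf_ofreal[OF psd_herm[OF Qpsd] w])
      have r_nn: "r j \<ge> 0" for j unfolding r_def by (rule psd_qf[OF Qpsd w])
      have "complex_of_real (\<Sum>j<n. r j) = (\<Sum>j<n. ip w (Q j *\<^sub>v w))" by (simp add: r_eq of_real_sum)
      also have "\<dots> = ip w (msum n Q {..<n} *\<^sub>v w)" by (rule ip_msum_plain[OF w w Qc, symmetric])
      also have "\<dots> = 1" unfolding Qsum using w ip_unit_col[OF W k] by (simp add: w_def)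
      finally have r1: "(\<Sum>j<n. r j) = 1" using of_real_eq_1_iff by blast
      have "complex_of_real (c k) = ip w (\<gamma> *\<^sub>v w)" unfolding gW w_def by (rule sp_qf_col[OF W k, symmetric])
      also have "\<dots> = complex_of_real (1 / z) * ip w (A *\<^sub>v w)" unfolding gam_eq by (rule ip_smult_mat[OF Ac w w])
      also have "ip w (A *\<^sub>v w) = (\<Sum>j<n. complex_of_real (q j) * ip w (Q j *\<^sub>v w))"
        unfolding A_eq by (rule ip_msum_smult[OF w w Qc])
      also have "\<dots> = complex_of_real (\<Sum>j<n. q j * r j)" by (simp add: r_eq of_real_sum)
      finally have "complex_of_real (c k) = complex_of_real (1 / z) * complex_of_real (\<Sum>j<n. q j * r j)" .
      then have "complex_of_real (c k) = complex_of_real (1 / z * (\<Sum>j<n. q j * r j))" by (simp only: of_real_mult)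
      then have "c k = 1 / z * (\<Sum>j<n. q j * r j)" using of_real_eq_iff by blast
      moreover have "(\<Sum>j<n. q j * r j) > 0" by (rule pos_comb) (use qpos r_nn r1 in auto)
      ultimately show ?thesis using zpos by simp
    qed
    have "fid = trace_norm (P * sp n W (\<lambda>k. sqrt (c k)))" unfolding fid_def fidelity_def P_def[symmetric] sgW ..
    also have "\<dots> \<le> (Re (trace (P * P)) + (\<Sum>k<n. c k)) / 2" by (rule trace_norm_le_half[OF Ppsd W cpos])
    also have "Re (trace (P * P)) = 1"
    proof -
      have "P * P = sp n U p" unfolding P_def G0 by (rule psd_sqrt_sq[OF psd_sp[OF Uc]]) (simp add: less_imp_le[OF ppos])
      then show ?thesis using p1 by (simp add: trace_sp[OF U] flip: of_real_sum)
    qed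
    also have "(\<Sum>k<n. c k) = 1"
    proof -
      have "complex_of_real (\<Sum>k<n. c k) = trace \<gamma>" unfolding gW trace_sp[OF W] by (simp add: of_real_sum)
      also have "\<dots> = complex_of_real (1 / z) * trace A" unfolding gam_eq by (rule trace_smult[OF Ac])
      also have "\<dots> = 1" using zpos by (simp add: trA flip: of_real_mult)
      finally show ?thesis using of_real_eq_1_iff by blast
    qed
    finally show ?thesis by simp
  qed

  have PG0: "\<Phi> (sp n U p) = msum n (\<lambda>i. complex_of_real (p i) \<cdot>\<^sub>m \<Phi> (R i)) {..<n}"
    unfolding R_def by (rule dual_sp[OF L])
  have PG0c: "\<Phi> (sp n U p) \<in> carrier_mat n n" using PG0 by simp
  have trE1: "Re (trace (\<Phi> (sp n U p) * sp n V g)) = (\<Sum>j<n. g j * (\<Sum>i<n. p i * a i j))"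
  proof -
    have "trace (\<Phi> (sp n U p) * sp n V g) = (\<Sum>j<n. complex_of_real (g j) * ip (col V j) (\<Phi> (sp n U p) *\<^sub>v col V j))"
      by (rule trace_mult_sp[OF PG0c Vc])
    also have "\<dots> = (\<Sum>j<n. complex_of_real (g j) * (\<Sum>i<n. complex_of_real (p i) * complex_of_real (a i j)))"
    proof (rule sum.cong[OF refl])
      fix j assume "j \<in> {..<n}"
      then have j: "j < n" by simp
      have vj: "col V j \<in> carrier_vec n" using Vc j by simp
      have "ip (col V j) (\<Phi> (sp n U p) *\<^sub>v col V j) = (\<Sum>i<n. complex_of_real (p i) * ip (col V j) (\<Phi> (R i) *\<^sub>v col V j))"
        unfolding PG0 by (rule ip_msum_smult[OF vj vj PRc])
      also have "\<dots> = (\<Sum>i<n. complex_of_real (p i) * complex_of_real (a i j))" using a_eq[OF j] by simp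
      finally show "complex_of_real (g j) * ip (col V j) (\<Phi> (sp n U p) *\<^sub>v col V j) = complex_of_real (g j) * (\<Sum>i<n. complex_of_real (p i) * complex_of_real (a i j))" by simp
    qed
    also have "\<dots> = complex_of_real (\<Sum>j<n. g j * (\<Sum>i<n. p i * a i j))" by (simp add: of_real_sum)
    finally show ?thesis by simp
  qed
  have trE0: "Re (trace (sp n U p * sp n U h)) = (\<Sum>k<n. p k * h k)"
    unfolding sp_mult[OF U] trace_sp[OF U] by (simp flip: of_real_sum)
  have s1: "(\<Sum>i<n. \<Sum>j<n. p i * a i j) = 1"
  proof -
    have "(\<Sum>i<n. \<Sum>j<n. p i * a i j) = (\<Sum>i<n. p i * (\<Sum>j<n. a i j))" by (simp add: sum_distrib_left)
    also have "\<dots> = (\<Sum>i<n. p i)" by (intro sum.cong refl) (simp add: a_sum)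
    finally show ?thesis using p1 by simp
  qed
  have s2: "(\<Sum>j<n. \<Sum>i<n. p i * a i j) = 1" using s1 sum.swap[of "\<lambda>i j. p i * a i j" "{..<n}" "{..<n}"] by simp
  define LHS where "LHS = \<beta> * ((Re (trace (\<Phi> (sp n U p) * sp n V g)) - Re (trace (sp n U p * sp n U h))) - (Ft - F0))"
  have LHS_eq: "LHS = (\<Sum>i<n. \<Sum>j<n. p i * a i j * (ln (p i) - ln (q j)))"
  proof -
    have "(\<Sum>i<n. \<Sum>j<n. p i * a i j * (ln (p i) - ln (q j))) = (\<Sum>i<n. \<Sum>j<n. p i * a i j * (ln (p i) + (- ln (q j))))"
      by simp
    also have "\<dots> = (\<Sum>i<n. p i * ln (p i) * (\<Sum>j<n. a i j)) + (\<Sum>j<n. (- ln (q j)) * (\<Sum>i<n. p i * a i j))"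
      by (rule double_sum_split)
    also have "(\<Sum>i<n. p i * ln (p i) * (\<Sum>j<n. a i j)) = (\<Sum>i<n. p i * (\<beta> * F0 - \<beta> * h i))"
      by (intro sum.cong refl) (simp add: a_sum lnp)
    also have "\<dots> = \<beta> * F0 * (\<Sum>i<n. p i) - \<beta> * (\<Sum>i<n. p i * h i)"
      by (simp add: algebra_simps sum_subtractf sum_distrib_left)
    also have "(\<Sum>j<n. (- ln (q j)) * (\<Sum>i<n. p i * a i j)) = \<beta> * (\<Sum>j<n. g j * (\<Sum>i<n. p i * a i j)) - \<beta> * Ft * (\<Sum>j<n. \<Sum>i<n. p i * a i j)"
      by (simp add: lnq algebra_simps sum_subtractf sum_distrib_left)
    finally show ?thesis unfolding LHS_def trE1 trE0 using p1 s2 by (simp add: algebra_simps)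
  qed
  have J: "LHS \<ge> - 2 * ln tau"
    unfolding LHS_eq tau_def by (rule jensen_pairs[OF ppos qpos a_nn s1])
  have main: "LHS \<ge> 8 / pi\<^sup>2 * (arccos fid)\<^sup>2 - ln z"
    by (rule final_comb[OF tau_pos zpos fid_pos fid_le fid_lb J])
  have gam': "(1 / trace (\<Phi>' (gibbs n \<beta> H\<tau>))) \<cdot>\<^sub>m \<Phi>' (gibbs n \<beta> H\<tau>) = \<gamma>"
    by (simp add: Gt A_def[symmetric] \<gamma>_def)
  have Zre: "Re (trace (\<Phi>' (gibbs n \<beta> H\<tau>))) = z" by (simp add: Gt A_def[symmetric] trA)
  show ?thesis
    unfolding Let_def gam' Zre bures_angle_def fid_def[symmetric]
    using main unfolding LHS_def G0[symmetric] H0[symmetric] Ht[symmetric] F0_def Ft_def by simp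
qed


end
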